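(* Assume Case 3 holds. Let $\mathcal{I}_f=[\alpha,l_2]$ if $\gamma>0$ and $\mathcal{I}_f=(0,l_2]$ if $\gamma=0$. Then for every $n\ge1$, $Q^n$ contains the term $z^{\gamma_n}w^{d^n}$, and for every $l\in\mathcal{I}_f$, $$w_l(Q^n)=w_l(z^{\gamma_n}w^{d^n})=\gamma_n+l\,d^n.$$
   Context: Let $f(z,w)=(p(z),q(z,w))$ be a holomorphic skew product germ at the origin of $\mathbb{C}^2$ with $f(0,0)=(0,0)$, where $p(z)=a_\delta z^\delta+O(z^{\delta+1})$ with $a_\delta\neq0$ and integer $\delta\ge1$, and $q(z,w)=\sum_{i+j\ge1}b_{ij}z^iw^j$ is not identically zero. For $n\ge1$ write $f^n=(p^n,Q^n)$. For a nonzero germ $g=\sum g_{ij}z^iw^j$, say $g$ contains $z^aw^b$ if $g_{ab}\neq0$, and for real $l>0$ let $w_l(g)=\min\{i+lj: g_{ij}\neq0\}$. The Newton polygon $N(g)$ is the convex hull of $\bigcup_{g_{ij}\neq0}\{(x,y):x\ge i,\ y\ge j\}$. Let $(n_1,m_1),\dots,(n_s,m_s)$ be the vertices of $N(q)$ with $n_1<\cdots<n_s$, $m_1>\cdots>m_s$; for $1\le k\le s-1$ let $T_k$ be the $y$-intercept of the line through $(n_k,m_k)$ and $(n_{k+1},m_{k+1})$. Case 3 means: $s>1$ and $T_1\le\delta$; set $(\gamma,d)=(n_1,m_1)$ and $l_2=\frac{n_2-n_1}{m_1-m_2}$ (then $\delta\ge d>0$, and $\delta>d$ if $\gamma>0$).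 Define $\gamma_n=\gamma(\delta^{n-1}+\delta^{n-2}d+\cdots+d^{n-1})$ and $\alpha=\gamma/(\delta-d)$ when $\delta\neq d$. *)

theory Defs
  imports "HOL-Analysis.Analysis"
begin

definition germ_series1 :: "(nat \<Rightarrow> complex) \<Rightarrow> (complex \<Rightarrow> complex) \<Rightarrow> bool" where
  "germ_series1 a p \<longleftrightarrow> (\<exists>r>0. \<forall>z. norm z < r \<longrightarrow> (\<lambda>k. a k * z ^ k) sums p z)"

definition germ_series2 :: "(nat \<Rightarrow> nat \<Rightarrow> complex) \<Rightarrow> (complex \<Rightarrow> complex \<Rightarrow> complex) \<Rightarrow> bool" where
  "germ_series2 b q \<longleftrightarrow> (\<exists>r>0. \<forall>z w. norm z < r \<and> norm w < r \<longrightarrow>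
      ((\<lambda>(i,j). b i j * z ^ i * w ^ j) has_sum q z w) UNIV)"

definition coeff2 :: "(complex \<Rightarrow> complex \<Rightarrow> complex) \<Rightarrow> nat \<Rightarrow> nat \<Rightarrow> complex" where
  "coeff2 g i j = (deriv ^^ i) (\<lambda>z. (deriv ^^ j) (g z) 0) 0 / (fact i * fact j)"

definition skew_iter :: "(complex \<Rightarrow> complex) \<Rightarrow> (complex \<Rightarrow> complex \<Rightarrow> complex) \<Rightarrow> nat \<Rightarrow> complex \<times> complex \<Rightarrow> complex \<times> complex" where
  "skew_iter p q n = ((\<lambda>(z,w). (p z, q z w)) ^^ n)"

definition Qn :: "(complex \<Rightarrow> complex) \<Rightarrow> (complex \<Rightarrow> complex \<Rightarrow> complex) \<Rightarrow> nat \<Rightarrow> complex \<Rightarrow> complex \<Rightarrow> complex" where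
  "Qn p q n z w = snd (skew_iter p q n (z, w))"

definition newton_polygon :: "(nat \<Rightarrow> nat \<Rightarrow> complex) \<Rightarrow> (real \<times> real) set" where
  "newton_polygon c = convex hull (\<Union>{{(x,y). x \<ge> real i \<and> y \<ge> real j} | i j. c i j \<noteq> 0})"

definition w_l :: "real \<Rightarrow> (nat \<Rightarrow> nat \<Rightarrow> complex) \<Rightarrow> real" where
  "w_l l c = Inf {real i + l * real j | i j. c i j \<noteq> 0}"

definition monomial2 :: "nat \<Rightarrow> nat \<Rightarrow> nat \<Rightarrow> nat \<Rightarrow> complex" where
  "monomial2 a b = (\<lambda>i j. if i = a \<and> j = b then 1 else 0)"

definition gamma_seq :: "nat \<Rightarrow> nat \<Rightarrow> nat \<Rightarrow> nat \<Rightarrow> nat" where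
  "gamma_seq \<gamma> \<delta> d n = \<gamma> * (\<Sum>k<n. \<delta> ^ (n - 1 - k) * d ^ k)"

end

theory Submission
  imports Defs
begin

lemma powser_higher_deriv:
  fixes c :: "nat \<Rightarrow> complex"
  assumes r: "r > 0" and s: "\<And>z. norm z < r \<Longrightarrow> (\<lambda>k. c k * z^k) sums f z"
  shows "(deriv ^^ n) f 0 = fact n * c n"
proof -
  have "summable (\<lambda>k. c k * (complex_of_real (r/2))^k)"
    using s[of "complex_of_real (r/2)"] r by (auto simp: sums_iff)
  then have "conv_radius c \<ge> norm (complex_of_real (r/2))" by (rule conv_radius_geI)
  then have cr: "fps_conv_radius (Abs_fps c) > 0"
    using r by (simp add: fps_conv_radius_def) (metis ereal_less(2) half_gt_zero less_le_trans)
  have ev: "eventually (\<lambda>z. eval_fps (Abs_fps c) z = f z) (nhds 0)"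
  proof -
    have "eventually (\<lambda>z. z \<in> ball 0 r) (nhds (0::complex))"
      using r by (intro eventually_nhds_in_open) auto
    then show ?thesis
      by eventually_elim (use s in \<open>auto simp: eval_fps_def sums_iff\<close>)
  qed
  have "f has_fps_expansion Abs_fps c"
    unfolding has_fps_expansion_def using cr ev by auto
  from fps_nth_fps_expansion[OF this, of n] show ?thesis by simp
qed

definition rep :: "(nat \<times> nat \<Rightarrow> complex) \<Rightarrow> (complex \<Rightarrow> complex \<Rightarrow> complex) \<Rightarrow> real \<Rightarrow> bool" where
  "rep c g r \<longleftrightarrow> r > 0 \<and> (\<forall>z w. norm z < r \<and> norm w < r \<longrightarrow>
      ((\<lambda>(i,j). c (i,j) * z^i * w^j) has_sum g z w) UNIV)"

lemma rep_inner:
  assumes "rep c g r" "norm z < r" "norm w < r"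
  shows "((\<lambda>j. (\<Sum>\<^sub>\<infinity>i. c (i,j) * z^i) * w^j) has_sum g z w) UNIV"
    and "\<And>j. (\<lambda>i. c (i,j) * z^i * w^j) summable_on UNIV"
proof -
  have h: "((\<lambda>(i,j). c (i,j) * z^i * w^j) has_sum g z w) UNIV"
    using assms unfolding rep_def by auto
  have h2: "((\<lambda>(j,i). c (i,j) * z^i * w^j) has_sum g z w) (Sigma UNIV (\<lambda>_. UNIV))"
  proof -
    have "((\<lambda>(i,j). c (i,j) * z^i * w^j) has_sum g z w) (UNIV \<times> UNIV)"
      using h by (simp only: UNIV_Times_UNIV)
    from has_sum_swap[THEN iffD1, OF this] show ?thesis by (simp add: case_prod_unfold)
  qed
  then have sm: "(\<lambda>(j,i). c (i,j) * z^i * w^j) summable_on (Sigma UNIV (\<lambda>_. UNIV))"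
    by (auto simp: summable_on_def)
  show inner: "(\<lambda>i. c (i,j) * z^i * w^j) summable_on UNIV" for j
    using summable_on_SigmaD1[of "\<lambda>j i. c (i,j) * z^i * w^j", OF sm] by auto
  have "((\<lambda>j. \<Sum>\<^sub>\<infinity>i. c (i,j) * z^i * w^j) has_sum g z w) UNIV"
    by (rule has_sum_Sigma'[OF h2]) (use inner in \<open>auto intro: has_sum_infsum\<close>)
  moreover have "(\<Sum>\<^sub>\<infinity>i. c (i,j) * z^i * w^j) = (\<Sum>\<^sub>\<infinity>i. c (i,j) * z^i) * w^j" for j
    by (rule infsum_cmult_left')
  ultimately show "((\<lambda>j. (\<Sum>\<^sub>\<infinity>i. c (i,j) * z^i) * w^j) has_sum g z w) UNIV" by simp
qed

lemma coeff2_rep: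
  assumes R: "rep c g r"
  shows "coeff2 g i j = c (i,j)"
proof -
  have r: "r > 0" using R by (simp add: rep_def)
  define C where "C j z = (\<Sum>\<^sub>\<infinity>i. c (i,j) * z^i)" for j z
  have d1: "(deriv ^^ j) (g z) 0 = fact j * C j z" if z: "norm z < r" for z
    by (rule powser_higher_deriv[OF r]) (use rep_inner(1)[OF R z] in \<open>auto simp: C_def intro: has_sum_imp_sums\<close>)
  have Cs: "(\<lambda>i. c (i,j) * z^i) sums C j z" if z: "norm z < r" for z
  proof -
    define w where "w = complex_of_real (r/2)"
    have w: "norm w < r" "w \<noteq> 0" using r by (auto simp: w_def)
    have "(\<lambda>i. c (i,j) * z^i * w^j) summable_on UNIV" by (rule rep_inner(2)[OF R z w(1)])
    then have "(\<lambda>i. (c (i,j) * z^i * w^j) * inverse (w^j)) summable_on UNIV"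
      by (rule summable_on_cmult_left)
    then have "(\<lambda>i. c (i,j) * z^i) summable_on UNIV" using w by (simp add: field_simps)
    then show ?thesis unfolding C_def by (intro has_sum_imp_sums has_sum_infsum)
  qed
  have ev: "eventually (\<lambda>z. (deriv ^^ j) (g z) 0 = fact j * C j z) (nhds 0)"
  proof -
    have "eventually (\<lambda>z. z \<in> ball 0 r) (nhds (0::complex))"
      using r by (intro eventually_nhds_in_open) auto
    then show ?thesis by eventually_elim (use d1 in auto)
  qed
  have "(deriv ^^ i) (\<lambda>z. (deriv ^^ j) (g z) 0) 0 = (deriv ^^ i) (\<lambda>z. fact j * C j z) 0"
    by (rule higher_deriv_cong_ev[OF ev refl])
  also have "\<dots> = fact i * (fact j * c (i,j))"
    by (rule powser_higher_deriv[OF r]) (use Cs in \<open>auto intro: sums_mult simp: mult.assoc\<close>)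
  finally show ?thesis unfolding coeff2_def by simp
qed

type_synonym arr = "nat \<times> nat \<Rightarrow> complex"

definition one2 :: arr where "one2 e = (if e = (0,0) then 1 else 0)"
definition mul2 :: "arr \<Rightarrow> arr \<Rightarrow> arr" where
  "mul2 A B e = (\<Sum>x\<in>{..fst e}\<times>{..snd e}. A x * B (fst e - fst x, snd e - snd x))"
primrec pow2 :: "arr \<Rightarrow> nat \<Rightarrow> arr" where
  "pow2 A 0 = one2" | "pow2 A (Suc n) = mul2 A (pow2 A n)"
definition comp2 :: "arr \<Rightarrow> arr \<Rightarrow> arr \<Rightarrow> arr" where
  "comp2 b P R e = (\<Sum>x\<in>{..fst e + snd e}\<times>{..fst e + snd e}.
      b x * mul2 (pow2 P (fst x)) (pow2 R (snd x)) e)"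

definition padd :: "nat \<times> nat \<Rightarrow> nat \<times> nat \<Rightarrow> nat \<times> nat" where
  "padd x y = (fst x + fst y, snd x + snd y)"
definition psc :: "nat \<Rightarrow> nat \<times> nat \<Rightarrow> nat \<times> nat" where
  "psc n x = (n * fst x, n * snd x)"
definition wt :: "real \<Rightarrow> nat \<times> nat \<Rightarrow> real" where
  "wt l x = real (fst x) + l * real (snd x)"
definition wb :: "real \<Rightarrow> arr \<Rightarrow> real \<Rightarrow> bool" where
  "wb l A c \<longleftrightarrow> (\<forall>x. A x \<noteq> 0 \<longrightarrow> c \<le> wt l x)"
definition kle :: "real \<Rightarrow> nat \<times> nat \<Rightarrow> nat \<times> nat \<Rightarrow> bool" where
  "kle L x y \<longleftrightarrow> wt L x < wt L y \<or> (wt L x = wt L y \<and> snd y \<le> snd x)"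
definition leadk :: "real \<Rightarrow> arr \<Rightarrow> nat \<times> nat \<Rightarrow> bool" where
  "leadk L A x0 \<longleftrightarrow> A x0 \<noteq> 0 \<and> (\<forall>x. A x \<noteq> 0 \<longrightarrow> kle L x0 x)"

lemma wt_padd: "wt l (padd x y) = wt l x + wt l y"
  by (simp add: wt_def padd_def algebra_simps)
lemma wt_psc: "wt l (psc n x) = real n * wt l x"
  by (simp add: wt_def psc_def algebra_simps)

lemma mul2_nz:
  assumes "mul2 A B e \<noteq> 0"
  shows "\<exists>x y. A x \<noteq> 0 \<and> B y \<noteq> 0 \<and> e = padd x y"
proof -
  from assms obtain x where x: "x \<in> {..fst e}\<times>{..snd e}" "A x * B (fst e - fst x, snd e - snd x) \<noteq> 0"
    unfolding mul2_def by (meson sum.neutral)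
  then show ?thesis
    by (intro exI[of _ x] exI[of _ "(fst e - fst x, snd e - snd x)"]) (auto simp: padd_def)
qed

lemma wb_mul2: "wb l A a \<Longrightarrow> wb l B b \<Longrightarrow> wb l (mul2 A B) (a + b)"
  unfolding wb_def by (metis add_mono mul2_nz wt_padd)

lemma wb_one2: "l \<ge> 0 \<Longrightarrow> wb l one2 0"
  by (simp add: wb_def one2_def wt_def)

lemma wb_pow2: "wb l A a \<Longrightarrow> l \<ge> 0 \<Longrightarrow> wb l (pow2 A n) (real n * a)"
proof (induction n)
  case 0 then show ?case by (simp add: wb_one2)
next
  case (Suc n)
  then have "wb l (mul2 A (pow2 A n)) (a + real n * a)" by (intro wb_mul2) auto
  then show ?case by (simp add: algebra_simps)
qed

lemma kle_refl: "kle L x x" by (simp add: kle_def)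

lemma kle_add: "kle L a b \<Longrightarrow> kle L c d \<Longrightarrow> kle L (padd a c) (padd b d)"
  unfolding kle_def wt_padd by (auto simp: padd_def)

lemma kle_add_eq:
  assumes "kle L x0 x" "kle L y0 y" "padd x y = padd x0 y0"
  shows "x = x0 \<and> y = y0"
proof -
  have w: "wt L x + wt L y = wt L x0 + wt L y0" using assms(3) by (metis wt_padd)
  have s: "snd x + snd y = snd x0 + snd y0" "fst x + fst y = fst x0 + fst y0"
    using assms(3) by (auto simp: padd_def)
  from assms(1,2) w have "wt L x = wt L x0" "wt L y = wt L y0" unfolding kle_def by linarith+
  with assms(1,2) s have "snd x = snd x0" "snd y = snd y0" unfolding kle_def by auto
  with \<open>wt L x = wt L x0\<close> \<open>wt L y = wt L y0\<close> have "fst x = fst x0" "fst y = fst y0"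
    by (auto simp: wt_def)
  then show ?thesis using \<open>snd x = snd x0\<close> \<open>snd y = snd y0\<close> by (simp add: prod_eq_iff)
qed

lemma mul2_leadk:
  assumes A: "leadk L A x0" and B: "leadk L B y0"
  shows "mul2 A B (padd x0 y0) = A x0 * B y0" "leadk L (mul2 A B) (padd x0 y0)"
proof -
  let ?e = "padd x0 y0"
  have box: "x0 \<in> {..fst ?e}\<times>{..snd ?e}" by (cases x0; cases y0) (auto simp: padd_def)
  have z: "A x * B (fst ?e - fst x, snd ?e - snd x) = 0" if "x \<in> {..fst ?e}\<times>{..snd ?e} - {x0}" for x
  proof (rule ccontr)
    assume nz: "A x * B (fst ?e - fst x, snd ?e - snd x) \<noteq> 0"
    let ?y = "(fst ?e - fst x, snd ?e - snd x)"
    have "A x \<noteq> 0" "B ?y \<noteq> 0" using nz by auto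
    then have "kle L x0 x" "kle L y0 ?y" using A B unfolding leadk_def by blast+
    moreover have "padd x ?y = padd x0 y0" using that by (auto simp: padd_def)
    ultimately have "x = x0" by (metis kle_add_eq)
    with that show False by simp
  qed
  have "mul2 A B ?e = A x0 * B (fst ?e - fst x0, snd ?e - snd x0)"
    unfolding mul2_def
  proof (rule sum.remove[OF _ box, THEN trans])
    have "(\<Sum>x\<in>{..fst ?e}\<times>{..snd ?e} - {x0}. A x * B (fst ?e - fst x, snd ?e - snd x)) = 0"
      by (rule sum.neutral) (use z in blast)
    then show "A x0 * B (fst ?e - fst x0, snd ?e - snd x0) +
      (\<Sum>x\<in>{..fst ?e}\<times>{..snd ?e} - {x0}. A x * B (fst ?e - fst x, snd ?e - snd x)) =
      A x0 * B (fst ?e - fst x0, snd ?e - snd x0)" by simp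
  qed simp
  also have "(fst ?e - fst x0, snd ?e - snd x0) = y0" by (simp add: padd_def)
  finally show v: "mul2 A B ?e = A x0 * B y0" .
  show "leadk L (mul2 A B) ?e"
    unfolding leadk_def
  proof (intro conjI allI impI)
    show "mul2 A B ?e \<noteq> 0" using v A B by (simp add: leadk_def)
    fix e assume "mul2 A B e \<noteq> 0"
    then obtain x y where "A x \<noteq> 0" "B y \<noteq> 0" "e = padd x y" using mul2_nz by blast
    with A B show "kle L ?e e" unfolding leadk_def by (metis kle_add)
  qed
qed

lemma one2_leadk: "leadk L one2 (0,0)"
  unfolding leadk_def by (auto simp: one2_def kle_def)

lemma pow2_leadk:
  assumes "leadk L A x0"
  shows "pow2 A n (psc n x0) = (A x0)^n \<and> leadk L (pow2 A n) (psc n x0)"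
proof (induction n)
  case 0 have "one2 (0,0) = 1" by (simp add: one2_def)
  then show ?case using one2_leadk[of L] by (simp add: psc_def)
next
  case (Suc n)
  have "psc (Suc n) x0 = padd x0 (psc n x0)" by (simp add: psc_def padd_def)
  then show ?case using mul2_leadk[OF assms, of "pow2 A n" "psc n x0"] Suc by simp
qed

lemma mul2_one2: "mul2 A one2 = A"
proof
  fix e
  show "mul2 A one2 e = A e"
    unfolding mul2_def
  proof (subst sum.remove[of _ e])
    show "e \<in> {..fst e} \<times> {..snd e}" by (cases e) auto
    have "\<forall>x\<in>{..fst e} \<times> {..snd e} - {e}. A x * one2 (fst e - fst x, snd e - snd x) = 0"
    proof
      fix x assume x: "x \<in> {..fst e} \<times> {..snd e} - {e}"
      then have ne: "(fst e - fst x, snd e - snd x) \<noteq> (0,0)" by (cases x; cases e) auto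
      show "A x * one2 (fst e - fst x, snd e - snd x) = 0" 
        by (subst one2_def) (simp only: if_not_P[OF ne] mult_zero_right)
    qed
    then have "(\<Sum>x\<in>{..fst e} \<times> {..snd e} - {e}. A x * one2 (fst e - fst x, snd e - snd x)) = 0"
      by (rule sum.neutral)
    then show "A e * one2 (fst e - fst e, snd e - snd e) +
       (\<Sum>x\<in>{..fst e} \<times> {..snd e} - {e}. A x * one2 (fst e - fst x, snd e - snd x)) = A e"
      by (simp add: one2_def)
  qed simp
qed

lemma pow2_vanish:
  assumes "A (0,0) = 0" "pow2 A n e \<noteq> 0"
  shows "n \<le> fst e + snd e"
proof -
  have "wb 1 A 1"
    unfolding wb_def wt_def
  proof (intro allI impI)
    fix x :: "nat \<times> nat" assume "A x \<noteq> 0"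
    then have "x \<noteq> (0,0)" using assms(1) by auto
    then have "fst x + snd x \<ge> 1" by (cases x) auto
    then show "1 \<le> real (fst x) + 1 * real (snd x)" by simp
  qed
  from wb_pow2[OF this, of n] assms(2) have "real n \<le> real (fst e) + real (snd e)"
    by (auto simp: wb_def wt_def)
  then show ?thesis by linarith
qed

lemma comp2_nz:
  assumes "comp2 b P R e \<noteq> 0"
  shows "\<exists>x. b x \<noteq> 0 \<and> mul2 (pow2 P (fst x)) (pow2 R (snd x)) e \<noteq> 0"
  using assms unfolding comp2_def by (metis (no_types, lifting) mult_eq_0_iff sum.neutral)

lemma comp2_single:
  assumes "x0 \<in> {..fst e + snd e}\<times>{..fst e + snd e}"
    and "\<And>x. x \<noteq> x0 \<Longrightarrow> b x * mul2 (pow2 P (fst x)) (pow2 R (snd x)) e = 0"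
  shows "comp2 b P R e = b x0 * mul2 (pow2 P (fst x0)) (pow2 R (snd x0)) e"
  unfolding comp2_def
proof (rule sum.remove[OF _ assms(1), THEN trans])
  have "\<forall>x\<in>{..fst e + snd e}\<times>{..fst e + snd e} - {x0}. b x * mul2 (pow2 P (fst x)) (pow2 R (snd x)) e = 0"
    using assms(2) by blast
  then show "b x0 * mul2 (pow2 P (fst x0)) (pow2 R (snd x0)) e +
    (\<Sum>x\<in>{..fst e + snd e}\<times>{..fst e + snd e} - {x0}. b x * mul2 (pow2 P (fst x)) (pow2 R (snd x)) e) =
    b x0 * mul2 (pow2 P (fst x0)) (pow2 R (snd x0)) e" by (subst sum.neutral) auto
qed simp

definition hs :: "arr \<Rightarrow> complex \<Rightarrow> complex \<Rightarrow> complex \<Rightarrow> bool" where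
  "hs A z w S \<longleftrightarrow> ((\<lambda>x. A x * z ^ fst x * w ^ snd x) has_sum S) UNIV"

lemma hs_summable_abs:
  assumes "hs A z w S"
  shows "(\<lambda>x. norm (A x * z ^ fst x * w ^ snd x)) summable_on UNIV"
proof -
  have "(\<lambda>x. A x * z ^ fst x * w ^ snd x) summable_on UNIV"
    using assms unfolding hs_def summable_on_def by blast
  then show ?thesis by (simp only: summable_on_iff_abs_summable_on_complex)
qed

lemma hs_mul2:
  assumes hA: "hs A z w SA" and hB: "hs B z w SB"
  shows "hs (mul2 A B) z w (SA * SB)"
proof -
  define F where "F x = A x * z ^ fst x * w ^ snd x" for x
  define G where "G y = B y * z ^ fst y * w ^ snd y" for y
  have F: "(F has_sum SA) UNIV" and G: "(G has_sum SB) UNIV"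
    using hA hB unfolding hs_def F_def G_def by auto
  have Fa: "(\<lambda>x. norm (F x)) summable_on UNIV" and Ga: "(\<lambda>x. norm (G x)) summable_on UNIV"
    using hs_summable_abs[OF hA] hs_summable_abs[OF hB] unfolding F_def G_def by auto
  have prod: "((\<lambda>(x,y). F x * G y) has_sum SA * SB) (UNIV \<times> UNIV)"
  proof (rule has_sum_SigmaI[where g = "\<lambda>x. F x * SB"])
    show "((\<lambda>y. (\<lambda>(x,y). F x * G y) (x, y)) has_sum F x * SB) UNIV" for x
      using has_sum_cmult_right[OF G, of "F x"] by simp
    show "((\<lambda>x. F x * SB) has_sum SA * SB) UNIV" by (rule has_sum_cmult_left[OF F])
    show "(\<lambda>(x,y). F x * G y) summable_on UNIV \<times> UNIV"
    proof (rule abs_summable_summable)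
      show "(\<lambda>p. norm ((\<lambda>(x,y). F x * G y) p)) summable_on UNIV \<times> UNIV"
      proof (rule Infinite_Sum.abs_summable_on_Sigma_iff[THEN iffD2], intro conjI ballI)
        fix x
        show "(\<lambda>y. norm ((\<lambda>(x,y). F x * G y) (x, y))) summable_on UNIV"
          using summable_on_cmult_right[OF Ga, of "norm (F x)"] by (simp add: norm_mult)
      next
        have "(\<lambda>x. norm (F x) * (\<Sum>\<^sub>\<infinity>y. norm (G y))) summable_on UNIV"
          by (rule summable_on_cmult_left[OF Fa])
        moreover have "(\<Sum>\<^sub>\<infinity>y. norm ((\<lambda>(x,y). F x * G y) (x, y))) = norm (F x) * (\<Sum>\<^sub>\<infinity>y. norm (G y))" for x
          by (simp add: norm_mult infsum_cmult_right')
        moreover have "(\<Sum>\<^sub>\<infinity>y. norm (G y)) \<ge> 0" by (rule infsum_nonneg) auto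
        ultimately show "(\<lambda>x. norm (\<Sum>\<^sub>\<infinity>y. norm ((\<lambda>(x,y). F x * G y) (x, y)))) summable_on UNIV"
          by (simp add: abs_mult)
      qed
    qed
  qed
  define h where "h = (\<lambda>(e,x). A x * B (fst e - fst x, snd e - snd x) * z ^ fst e * w ^ snd e)"
  define T where "T = Sigma (UNIV :: (nat\<times>nat) set) (\<lambda>e. {..fst e}\<times>{..snd e})"
  have hT: "(h has_sum SA * SB) T"
  proof -
    have "((\<lambda>(x,y). F x * G y) has_sum SA * SB) (UNIV \<times> UNIV) = (h has_sum SA * SB) T"
    proof (rule has_sum_reindex_bij_witness[where j = "\<lambda>(x,y). (padd x y, x)"
          and i = "\<lambda>(e,x). (x, (fst e - fst x, snd e - snd x))"])
      fix a :: "(nat\<times>nat)\<times>(nat\<times>nat)"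
      show "(\<lambda>(e,x). (x, (fst e - fst x, snd e - snd x))) ((\<lambda>(x,y). (padd x y, x)) a) = a"
        by (cases a) (auto simp: padd_def)
      show "(\<lambda>(x,y). (padd x y, x)) a \<in> T" by (cases a) (auto simp: padd_def T_def)
      show "h ((\<lambda>(x,y). (padd x y, x)) a) = (\<lambda>(x,y). F x * G y) a"
      proof -
        obtain x y where a: "a = (x,y)" by (cases a)
        have "A x * B y * z ^ (fst x + fst y) * w ^ (snd x + snd y) = F x * G y"
          unfolding F_def G_def power_add by algebra
        then show ?thesis unfolding a h_def padd_def by simp
      qed
    next
      fix b :: "(nat\<times>nat)\<times>(nat\<times>nat)" assume "b \<in> T"
      then show "(\<lambda>(x,y). (padd x y, x)) ((\<lambda>(e,x). (x, (fst e - fst x, snd e - snd x))) b) = b"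
        by (cases b) (auto simp: padd_def T_def)
    qed auto
    with prod show ?thesis by simp
  qed
  have "((\<lambda>e. mul2 A B e * z ^ fst e * w ^ snd e) has_sum SA * SB) UNIV"
  proof (rule has_sum_Sigma'[OF hT[unfolded T_def]])
    fix e :: "nat \<times> nat"
    show "((\<lambda>x. h (e, x)) has_sum mul2 A B e * z ^ fst e * w ^ snd e) ({..fst e}\<times>{..snd e})"
    proof (rule has_sum_finiteI)
      show "finite ({..fst e}\<times>{..snd e})" by simp
      have "mul2 A B e * z ^ fst e * w ^ snd e =
            (\<Sum>x\<in>{..fst e}\<times>{..snd e}. A x * B (fst e - fst x, snd e - snd x) * z ^ fst e * w ^ snd e)"
        unfolding mul2_def sum_distrib_right ..
      also have "\<dots> = (\<Sum>x\<in>{..fst e}\<times>{..snd e}. h (e, x))"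
        unfolding h_def by (rule sum.cong) auto
      finally show "mul2 A B e * z ^ fst e * w ^ snd e = (\<Sum>x\<in>{..fst e}\<times>{..snd e}. h (e, x))" .
    qed
  qed
  then show ?thesis unfolding hs_def .
qed

lemma hs_one2: "hs one2 z w 1"
  unfolding hs_def
  by (rule has_sum_finite_neutralI[of "{(0,0)}"]) (auto simp: one2_def)

lemma hs_pow2: "hs A z w S \<Longrightarrow> hs (pow2 A n) z w (S ^ n)"
  by (induction n) (simp_all add: hs_one2 hs_mul2)

definition maj :: "arr \<Rightarrow> arr \<Rightarrow> bool" where
  "maj A M \<longleftrightarrow> (\<forall>x. M x = of_real (Re (M x)) \<and> norm (A x) \<le> Re (M x))"

lemma maj_mul2:
  assumes "maj A M" "maj B N"
  shows "maj (mul2 A B) (mul2 M N)"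
  unfolding maj_def
proof (intro allI conjI)
  fix e :: "nat \<times> nat"
  let ?S = "{..fst e}\<times>{..snd e}"
  have eq: "mul2 M N e = of_real (\<Sum>x\<in>?S. Re (M x) * Re (N (fst e - fst x, snd e - snd x)))"
  proof -
    have hM: "\<And>x. of_real (Re (M x)) = M x" using assms(1) unfolding maj_def by (metis (no_types))
    have hN: "\<And>x. of_real (Re (N x)) = N x" using assms(2) unfolding maj_def by (metis (no_types))
    show ?thesis unfolding mul2_def of_real_sum of_real_mult hM hN ..
  qed
  then show "mul2 M N e = of_real (Re (mul2 M N e))" by (simp only: Re_complex_of_real)
  have "norm (mul2 A B e) \<le> (\<Sum>x\<in>?S. norm (A x * B (fst e - fst x, snd e - snd x)))"
    unfolding mul2_def by (rule norm_sum)
  also have "\<dots> \<le> (\<Sum>x\<in>?S. Re (M x) * Re (N (fst e - fst x, snd e - snd x)))"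
  proof (rule sum_mono)
    fix x
    let ?y = "(fst e - fst x, snd e - snd x)"
    have "norm (A x) \<le> Re (M x)" using assms(1) unfolding maj_def by blast
    moreover have "norm (B ?y) \<le> Re (N ?y)" using assms(2) unfolding maj_def by blast
    moreover have "0 \<le> norm (B ?y)" by simp
    moreover have "0 \<le> Re (M x)" using calculation(1) norm_ge_zero[of "A x"] by linarith
    ultimately show "norm (A x * B ?y) \<le> Re (M x) * Re (N ?y)"
      unfolding norm_mult by (intro mult_mono) auto
  qed
  also have "\<dots> = Re (mul2 M N e)" by (subst eq) (rule Re_complex_of_real[symmetric])
  finally show "norm (mul2 A B e) \<le> Re (mul2 M N e)" .
qed

lemma maj_one2: "maj one2 one2"
  unfolding maj_def one2_def by simp

lemma maj_pow2: "maj A M \<Longrightarrow> maj (pow2 A n) (pow2 M n)"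
  by (induction n) (simp_all add: maj_one2 maj_mul2)

lemma maj_abs: "maj A (\<lambda>x. of_real (norm (A x)))"
  by (simp add: maj_def)

lemma rep_hs: "rep c g r \<Longrightarrow> norm z < r \<Longrightarrow> norm w < r \<Longrightarrow> hs c z w (g z w)"
  unfolding rep_def hs_def by (auto simp: case_prod_unfold)

lemma hs_rep: "r > 0 \<Longrightarrow> (\<And>z w. norm z < r \<Longrightarrow> norm w < r \<Longrightarrow> hs c z w (g z w)) \<Longrightarrow> rep c g r"
  unfolding rep_def hs_def by (auto simp: case_prod_unfold)

lemma mul2_pow_vanish:
  assumes "P (0,0) = 0" "R (0,0) = 0" "mul2 (pow2 P i) (pow2 R j) e \<noteq> 0"
  shows "i + j \<le> fst e + snd e"
proof -
  obtain x y where "pow2 P i x \<noteq> 0" "pow2 R j y \<noteq> 0" "e = padd x y"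
    using mul2_nz[OF assms(3)] by blast
  moreover have "i \<le> fst x + snd x" by (rule pow2_vanish[of P i x]) fact+
  moreover have "j \<le> fst y + snd y" by (rule pow2_vanish[of R j y]) fact+
  ultimately show ?thesis by (simp add: padd_def)
qed

lemma small_bound:
  fixes P :: arr
  assumes P0: "P (0,0) = 0" and sm: "(\<lambda>x. norm (P x) * r0 ^ fst x * r0 ^ snd x) summable_on UNIV"
    and r0: "r0 > 0" and s: "0 \<le> s" "s \<le> r0"
  shows "(\<lambda>x. norm (P x) * s ^ fst x * s ^ snd x) summable_on UNIV"
    and "(\<Sum>\<^sub>\<infinity>x. norm (P x) * s ^ fst x * s ^ snd x) \<le> s / r0 * (\<Sum>\<^sub>\<infinity>x. norm (P x) * r0 ^ fst x * r0 ^ snd x)"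
proof -
  have pt: "norm (P x) * s ^ fst x * s ^ snd x \<le> s / r0 * (norm (P x) * r0 ^ fst x * r0 ^ snd x)" for x
  proof (cases "x = (0,0)")
    case True then show ?thesis using P0 by simp
  next
    case False
    then have k: "fst x + snd x \<ge> 1" by (cases x) auto
    have q: "0 \<le> s / r0" "s / r0 \<le> 1" using r0 s by auto
    have "s ^ fst x * s ^ snd x = (s / r0) ^ (fst x + snd x) * r0 ^ (fst x + snd x)"
      using r0 by (simp add: power_add[symmetric] power_divide)
    also have "\<dots> \<le> (s / r0) ^ 1 * r0 ^ (fst x + snd x)"
      by (intro mult_right_mono power_decreasing k q) (use r0 in auto)
    finally have "s ^ fst x * s ^ snd x \<le> s / r0 * (r0 ^ fst x * r0 ^ snd x)"
      by (simp add: power_add)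
    then have "norm (P x) * (s ^ fst x * s ^ snd x) \<le> norm (P x) * (s / r0 * (r0 ^ fst x * r0 ^ snd x))"
      by (intro mult_left_mono) auto
    then show ?thesis by (simp add: mult_ac)
  qed
  have sm2: "(\<lambda>x. s / r0 * (norm (P x) * r0 ^ fst x * r0 ^ snd x)) summable_on UNIV"
    by (rule summable_on_cmult_right[OF sm])
  show sm3: "(\<lambda>x. norm (P x) * s ^ fst x * s ^ snd x) summable_on UNIV"
    by (rule summable_on_comparison_test[OF sm2]) (use pt s in auto)
  have "(\<Sum>\<^sub>\<infinity>x. norm (P x) * s ^ fst x * s ^ snd x) \<le> (\<Sum>\<^sub>\<infinity>x. s / r0 * (norm (P x) * r0 ^ fst x * r0 ^ snd x))"
    by (rule infsum_mono[OF sm3 sm2 pt])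
  also have "\<dots> = s / r0 * (\<Sum>\<^sub>\<infinity>x. norm (P x) * r0 ^ fst x * r0 ^ snd x)"
    by (rule infsum_cmult_right')
  finally show "(\<Sum>\<^sub>\<infinity>x. norm (P x) * s ^ fst x * s ^ snd x) \<le> s / r0 * (\<Sum>\<^sub>\<infinity>x. norm (P x) * r0 ^ fst x * r0 ^ snd x)" .
qed

lemma hs_norm_bound:
  assumes "hs A z w S" "norm z \<le> s" "norm w \<le> s"
    and "((\<lambda>x. norm (A x) * s ^ fst x * s ^ snd x) has_sum M) UNIV"
  shows "norm S \<le> M"
proof (rule norm_infsum_le[OF assms(1)[unfolded hs_def] assms(4)])
  fix x :: "nat \<times> nat"
  have "norm z ^ fst x \<le> s ^ fst x" "norm w ^ snd x \<le> s ^ snd x"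
    using assms(2,3) by (auto intro: power_mono)
  moreover have "0 \<le> s" using assms(2) norm_ge_zero[of z] by linarith
  ultimately show "norm (A x * z ^ fst x * w ^ snd x) \<le> norm (A x) * s ^ fst x * s ^ snd x"
    unfolding norm_mult norm_power by (intro mult_mono) auto
qed

lemma abs_fam_summable:
  assumes "rep P Pf rP" "0 < r0" "r0 < rP"
  shows "(\<lambda>x. norm (P x) * r0 ^ fst x * r0 ^ snd x) summable_on UNIV"
proof -
  have "hs P (of_real r0) (of_real r0) (Pf (of_real r0) (of_real r0))"
    by (rule rep_hs[OF assms(1)]) (use assms in auto)
  from hs_summable_abs[OF this] show ?thesis
    using assms(2) by (simp add: norm_mult norm_power)
qed

lemma hs_abs:
  assumes "((\<lambda>x. norm (P x) * s ^ fst x * s ^ snd x) has_sum Pt) UNIV"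
  shows "hs (\<lambda>x. of_real (norm (P x))) (of_real s) (of_real s) (of_real Pt)"
  unfolding hs_def using has_sum_of_real[OF assms, where 'a=complex]
  by (simp add: of_real_mult of_real_power)

lemma Re_pow_real: "Re (x * complex_of_real s ^ a * complex_of_real s ^ b) = Re x * s ^ a * s ^ b"
proof -
  have "x * complex_of_real s ^ a * complex_of_real s ^ b = x * complex_of_real (s ^ a * s ^ b)"
    by (simp add: mult.assoc)
  also have "Re \<dots> = Re x * (s ^ a * s ^ b)" by simp
  finally show ?thesis by (simp add: mult.assoc)
qed

lemma comp_rep:
  assumes rb: "rep b G rb" and rP: "rep P Pf rP" and rR: "rep R Rf rR"
    and P0: "P (0,0) = 0" and R0: "R (0,0) = 0"
  shows "\<exists>r. rep (comp2 b P R) (\<lambda>z w. G (Pf z w) (Rf z w)) r"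
proof -
  have pos: "rb > 0" "rP > 0" "rR > 0" using rb rP rR by (auto simp: rep_def)
  define r0 where "r0 = min rP rR / 2"
  have r0: "0 < r0" "r0 < rP" "r0 < rR" using pos by (auto simp: r0_def)
  define MP where "MP = (\<Sum>\<^sub>\<infinity>x. norm (P x) * r0 ^ fst x * r0 ^ snd x)"
  define MR where "MR = (\<Sum>\<^sub>\<infinity>x. norm (R x) * r0 ^ fst x * r0 ^ snd x)"
  have smP: "(\<lambda>x. norm (P x) * r0 ^ fst x * r0 ^ snd x) summable_on UNIV"
    by (rule abs_fam_summable[OF rP r0(1,2)])
  have smR: "(\<lambda>x. norm (R x) * r0 ^ fst x * r0 ^ snd x) summable_on UNIV"
    by (rule abs_fam_summable[OF rR r0(1,3)])
  have MP0: "MP \<ge> 0" unfolding MP_def using r0 by (intro infsum_nonneg) simp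
  have MR0: "MR \<ge> 0" unfolding MR_def using r0 by (intro infsum_nonneg) simp
  define D where "D = 2 * (MP + MR + 1)"
  have D: "D > 0" "MP < D" "MR < D" using MP0 MR0 by (auto simp: D_def)
  define s where "s = min r0 (r0 * rb / D)"
  have s: "0 < s" "s \<le> r0" using r0 pos D by (auto simp: s_def)
  have c: "s / r0 \<le> rb / D"
  proof -
    have "s \<le> r0 * rb / D" by (simp add: s_def)
    then show ?thesis using r0 by (simp add: pos_divide_le_eq mult.commute)
  qed
  have key: "s / r0 * M < rb" if "0 \<le> M" "M < D" for M
  proof -
    have "s / r0 * M \<le> rb / D * M" using c that by (intro mult_right_mono) auto
    also have "\<dots> < rb" using that D pos by (simp add: pos_divide_less_eq)
    finally show ?thesis .
  qed
  define Pt where "Pt = (\<Sum>\<^sub>\<infinity>x. norm (P x) * s ^ fst x * s ^ snd x)"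
  define Rt where "Rt = (\<Sum>\<^sub>\<infinity>x. norm (R x) * s ^ fst x * s ^ snd x)"
  have smPs: "(\<lambda>x. norm (P x) * s ^ fst x * s ^ snd x) summable_on UNIV"
    by (rule small_bound(1)[OF P0 smP r0(1)]) (use s in auto)
  have smRs: "(\<lambda>x. norm (R x) * s ^ fst x * s ^ snd x) summable_on UNIV"
    by (rule small_bound(1)[OF R0 smR r0(1)]) (use s in auto)
  have Ptb: "Pt \<le> s / r0 * MP" unfolding Pt_def MP_def
    by (rule small_bound(2)[OF P0 smP r0(1)]) (use s in auto)
  have Rtb: "Rt \<le> s / r0 * MR" unfolding Rt_def MR_def
    by (rule small_bound(2)[OF R0 smR r0(1)]) (use s in auto)
  have Pt_lt: "Pt < rb" using Ptb key[OF MP0 D(2)] by linarith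
  have Rt_lt: "Rt < rb" using Rtb key[OF MR0 D(3)] by linarith
  have Pt0: "Pt \<ge> 0" unfolding Pt_def using s by (intro infsum_nonneg) simp
  have Rt0: "Rt \<ge> 0" unfolding Rt_def using s by (intro infsum_nonneg) simp
  have hasPt: "((\<lambda>x. norm (P x) * s ^ fst x * s ^ snd x) has_sum Pt) UNIV"
    unfolding Pt_def by (rule has_sum_infsum[OF smPs])
  have hasRt: "((\<lambda>x. norm (R x) * s ^ fst x * s ^ snd x) has_sum Rt) UNIV"
    unfolding Rt_def by (rule has_sum_infsum[OF smRs])
  define Pa where "Pa = (\<lambda>x. complex_of_real (norm (P x)))"
  define Ra where "Ra = (\<lambda>x. complex_of_real (norm (R x)))"
  have hPa: "hs Pa (of_real s) (of_real s) (of_real Pt)" unfolding Pa_def by (rule hs_abs[OF hasPt])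
  have hRa: "hs Ra (of_real s) (of_real s) (of_real Rt)" unfolding Ra_def by (rule hs_abs[OF hasRt])
  have gsum: "(\<lambda>ij. norm (b ij * complex_of_real Pt ^ fst ij * complex_of_real Rt ^ snd ij)) summable_on UNIV"
  proof -
    have "hs b (of_real Pt) (of_real Rt) (G (of_real Pt) (of_real Rt))"
      by (rule rep_hs[OF rb]) (use Pt_lt Rt_lt Pt0 Rt0 in auto)
    from hs_summable_abs[OF this] show ?thesis .
  qed
  show ?thesis
  proof (rule exI[of _ s], rule hs_rep[OF s(1)])
    fix z w :: complex assume z: "norm z < s" and w: "norm w < s"
    have hP: "hs P z w (Pf z w)" by (rule rep_hs[OF rP]) (use z w s r0 in auto)
    have hR: "hs R z w (Rf z w)" by (rule rep_hs[OF rR]) (use z w s r0 in auto)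
    have nP: "norm (Pf z w) \<le> Pt" by (rule hs_norm_bound[OF hP _ _ hasPt]) (use z w in auto)
    have nR: "norm (Rf z w) \<le> Rt" by (rule hs_norm_bound[OF hR _ _ hasRt]) (use z w in auto)
    have hG: "hs b (Pf z w) (Rf z w) (G (Pf z w) (Rf z w))"
      by (rule rep_hs[OF rb]) (use nP nR Pt_lt Rt_lt in auto)
    define T where "T = (\<lambda>(ij::nat\<times>nat, e::nat\<times>nat). b ij * (mul2 (pow2 P (fst ij)) (pow2 R (snd ij)) e * z ^ fst e * w ^ snd e))"
    have inner: "((\<lambda>e. T (ij, e)) has_sum b ij * (Pf z w ^ fst ij * Rf z w ^ snd ij)) UNIV" for ij
    proof -
      have "hs (mul2 (pow2 P (fst ij)) (pow2 R (snd ij))) z w (Pf z w ^ fst ij * Rf z w ^ snd ij)"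
        by (intro hs_mul2 hs_pow2 hP hR)
      from has_sum_cmult_right[OF this[unfolded hs_def], of "b ij"] show ?thesis by (simp add: T_def)
    qed
    have outer: "((\<lambda>ij. b ij * (Pf z w ^ fst ij * Rf z w ^ snd ij)) has_sum G (Pf z w) (Rf z w)) UNIV"
      using hG unfolding hs_def by (simp add: mult.assoc)
    have summ: "T summable_on UNIV \<times> UNIV"
    proof (rule abs_summable_summable, rule Infinite_Sum.abs_summable_on_Sigma_iff[THEN iffD2], intro conjI ballI)
      fix ij :: "nat \<times> nat"
      have "(\<lambda>e. T (ij, e)) summable_on UNIV" unfolding summable_on_def using inner[of ij] by (rule exI)
      then show "(\<lambda>e. norm (T (ij, e))) summable_on UNIV" by (simp only: summable_on_iff_abs_summable_on_complex)
    next
      show "(\<lambda>ij. norm (\<Sum>\<^sub>\<infinity>e. norm (T (ij, e)))) summable_on UNIV"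
      proof (rule Infinite_Sum.abs_summable_on_comparison_test[OF gsum])
        fix ij :: "nat \<times> nat"
        define i where "i = fst ij"
        define j where "j = snd ij"
        define C where "C = mul2 (pow2 P i) (pow2 R j)"
        define C' where "C' = mul2 (pow2 Pa i) (pow2 Ra j)"
        have mj: "maj C C'" unfolding C_def C'_def Pa_def Ra_def by (intro maj_mul2 maj_pow2 maj_abs)
        have hC': "hs C' (of_real s) (of_real s) (of_real Pt ^ i * of_real Rt ^ j)"
          unfolding C'_def by (intro hs_mul2 hs_pow2 hPa hRa)
        have hRe: "((\<lambda>e. Re (C' e) * s ^ fst e * s ^ snd e) has_sum Pt ^ i * Rt ^ j) UNIV"
        proof -
          have "((\<lambda>e. Re (C' e * complex_of_real s ^ fst e * complex_of_real s ^ snd e)) has_sum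
                 Re (complex_of_real Pt ^ i * complex_of_real Rt ^ j)) UNIV"
            by (rule has_sum_Re[OF hC'[unfolded hs_def]])
          moreover have "Re (complex_of_real Pt ^ i * complex_of_real Rt ^ j) = Pt ^ i * Rt ^ j"
            by (simp flip: of_real_power of_real_mult)
          ultimately show ?thesis by (simp only: Re_pow_real)
        qed
        have nsum: "(\<lambda>e. norm (C e * z ^ fst e * w ^ snd e)) summable_on UNIV"
        proof -
          have "hs C z w (Pf z w ^ i * Rf z w ^ j)" unfolding C_def by (intro hs_mul2 hs_pow2 hP hR)
          from hs_summable_abs[OF this] show ?thesis .
        qed
        have bnd: "(\<Sum>\<^sub>\<infinity>e. norm (C e * z ^ fst e * w ^ snd e)) \<le> Pt ^ i * Rt ^ j"
        proof -
          have "(\<Sum>\<^sub>\<infinity>e. norm (C e * z ^ fst e * w ^ snd e)) \<le> (\<Sum>\<^sub>\<infinity>e. Re (C' e) * s ^ fst e * s ^ snd e)"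
          proof (rule infsum_mono[OF nsum])
            show "(\<lambda>e. Re (C' e) * s ^ fst e * s ^ snd e) summable_on UNIV"
              using hRe by (auto simp: summable_on_def)
            fix e :: "nat \<times> nat"
            have "norm z ^ fst e \<le> s ^ fst e" "norm w ^ snd e \<le> s ^ snd e"
              using z w by (auto intro: power_mono)
            moreover have "norm (C e) \<le> Re (C' e)" using mj unfolding maj_def by (metis (no_types))
            moreover have "0 \<le> Re (C' e)" using calculation(3) norm_ge_zero[of "C e"] by linarith
            ultimately show "norm (C e * z ^ fst e * w ^ snd e) \<le> Re (C' e) * s ^ fst e * s ^ snd e"
              unfolding norm_mult norm_power using s by (intro mult_mono) auto
          qed
          also have "\<dots> = Pt ^ i * Rt ^ j" using hRe by (simp add: infsumI)
          finally show ?thesis .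
        qed
        have "(\<Sum>\<^sub>\<infinity>e. norm (T (ij, e))) = norm (b ij) * (\<Sum>\<^sub>\<infinity>e. norm (C e * z ^ fst e * w ^ snd e))"
          unfolding T_def C_def i_def j_def by (simp add: norm_mult infsum_cmult_right' case_prod_unfold mult.assoc)
        also have "\<dots> \<le> norm (b ij) * (Pt ^ i * Rt ^ j)" using bnd by (intro mult_left_mono) auto
        finally have "(\<Sum>\<^sub>\<infinity>e. norm (T (ij, e))) \<le> norm (b ij) * (Pt ^ i * Rt ^ j)" .
        moreover have "(\<Sum>\<^sub>\<infinity>e. norm (T (ij, e))) \<ge> 0" by (intro infsum_nonneg) auto
        ultimately show "norm (\<Sum>\<^sub>\<infinity>e. norm (T (ij, e))) \<le> norm (b ij * complex_of_real Pt ^ fst ij * complex_of_real Rt ^ snd ij)"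
          using Pt0 Rt0 by (simp add: norm_mult norm_power i_def j_def mult.assoc)
      qed
    qed
    have "(T has_sum G (Pf z w) (Rf z w)) (UNIV \<times> UNIV)"
      by (rule has_sum_SigmaI[OF inner outer summ])
    then have sw: "((\<lambda>(e,ij). T (ij,e)) has_sum G (Pf z w) (Rf z w)) (UNIV \<times> UNIV)"
      by (rule has_sum_swap[THEN iffD1])
    have "((\<lambda>e. comp2 b P R e * z ^ fst e * w ^ snd e) has_sum G (Pf z w) (Rf z w)) UNIV"
    proof (rule has_sum_Sigma'[OF sw])
      fix e :: "nat \<times> nat"
      let ?B = "{..fst e + snd e}\<times>{..fst e + snd e}"
      show "((\<lambda>ij. (\<lambda>(e,ij). T (ij,e)) (e, ij)) has_sum comp2 b P R e * z ^ fst e * w ^ snd e) UNIV"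
      proof (rule has_sum_finite_neutralI[of ?B])
        show "finite ?B" by simp
        show "?B \<subseteq> UNIV" by simp
        show "(\<lambda>(e,ij). T (ij,e)) (e, x) = 0" if "x \<in> UNIV - ?B" for x
        proof -
          have "mul2 (pow2 P (fst x)) (pow2 R (snd x)) e = 0"
          proof (rule ccontr)
            assume "mul2 (pow2 P (fst x)) (pow2 R (snd x)) e \<noteq> 0"
            from mul2_pow_vanish[OF P0 R0 this] that show False by (cases x) auto
          qed
          then show ?thesis by (simp add: T_def)
        qed
        show "comp2 b P R e * z ^ fst e * w ^ snd e = (\<Sum>x\<in>?B. (\<lambda>(e,ij). T (ij,e)) (e, x))"
          unfolding comp2_def sum_distrib_right by (rule sum.cong) (auto simp: T_def mult.assoc)
      qed
    qed
    then show "hs (comp2 b P R) z w (G (Pf z w) (Rf z w))" unfolding hs_def by simp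
  qed
qed

definition NU :: "(nat \<Rightarrow> nat \<Rightarrow> complex) \<Rightarrow> (real \<times> real) set" where
  "NU b = \<Union>{{(x,y). x \<ge> real i \<and> y \<ge> real j} | i j. b i j \<noteq> 0}"

lemma NU_iff: "u \<in> NU b \<longleftrightarrow> (\<exists>i j. b i j \<noteq> 0 \<and> fst u \<ge> real i \<and> snd u \<ge> real j)"
  unfolding NU_def by (cases u) auto

lemma np_NU: "newton_polygon b = convex hull (NU b)"
  unfolding newton_polygon_def NU_def ..

lemma NU_sub: "NU b \<subseteq> newton_polygon b"
  unfolding np_NU by (rule hull_subset)

lemma np_upward:
  assumes "x \<in> newton_polygon b" "fst v \<ge> 0" "snd v \<ge> 0"
  shows "v + x \<in> newton_polygon b"
proof -
  have sub: "(\<lambda>y. v + y) ` NU b \<subseteq> NU b"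
  proof
    fix u assume "u \<in> (\<lambda>y. v + y) ` NU b"
    then obtain y where y: "y \<in> NU b" "u = v + y" by auto
    then obtain i j where "b i j \<noteq> 0" "fst y \<ge> real i" "snd y \<ge> real j" by (auto simp: NU_iff)
    with y assms(2,3) show "u \<in> NU b" unfolding NU_iff by (intro exI[of _ i] exI[of _ j]) auto
  qed
  have "v + x \<in> (\<lambda>y. v + y) ` (convex hull NU b)" using assms(1) unfolding np_NU by auto
  also have "\<dots> = convex hull ((\<lambda>y. v + y) ` NU b)" by (rule convex_hull_translation[symmetric])
  also have "\<dots> \<subseteq> convex hull NU b" using sub by (rule hull_mono)
  finally show ?thesis unfolding np_NU .
qed

lemma not_extreme_mid:
  assumes "a \<in> S" "c \<in> S" "a \<noteq> c" "x = midpoint a c"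
  shows "\<not> x extreme_point_of S"
  unfolding extreme_point_of_def using assms by (metis midpoint_in_open_segment)

lemma dom_extreme:
  assumes ext: "v extreme_point_of newton_polygon b" and b: "b i j \<noteq> 0"
    and le: "fst v \<ge> real i" "snd v \<ge> real j"
  shows "v = (real i, real j)"
proof (rule ccontr)
  assume ne: "v \<noteq> (real i, real j)"
  define p where "p = (real i, real j)"
  define dv where "dv = v - p"
  have dv: "fst dv \<ge> 0" "snd dv \<ge> 0" "dv \<noteq> 0" using le ne by (auto simp: dv_def p_def prod_eq_iff)
  have pN: "p \<in> newton_polygon b" using NU_sub b unfolding p_def by (force simp: NU_iff)
  define a where "a = (1/2) *\<^sub>R dv + p"
  define c where "c = (3/2) *\<^sub>R dv + p"
  have aN: "a \<in> newton_polygon b" unfolding a_def by (rule np_upward[OF pN]) (use dv in auto)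
  have cN: "c \<in> newton_polygon b" unfolding c_def by (rule np_upward[OF pN]) (use dv in auto)
  have "a \<noteq> c" using dv(3) by (auto simp: a_def c_def)
  moreover have "v = midpoint a c" by (simp add: a_def c_def midpoint_def dv_def prod_eq_iff field_simps)
  ultimately show False using not_extreme_mid[OF aN cN] ext by blast
qed

lemma ext_in_supp:
  assumes ext: "v extreme_point_of newton_polygon b"
  shows "\<exists>i j. b i j \<noteq> 0 \<and> v = (real i, real j)"
proof -
  have "v \<in> NU b" using extreme_point_of_convex_hull ext unfolding np_NU by blast
  then obtain i j where "b i j \<noteq> 0" "fst v \<ge> real i" "snd v \<ge> real j" by (auto simp: NU_iff)
  with dom_extreme[OF ext] show ?thesis by blast
qed

lemma ext_crit:
  fixes \<phi> g :: "real \<times> real \<Rightarrow> real"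
  assumes lin\<phi>: "\<And>x y u v. \<phi> (u *\<^sub>R x + v *\<^sub>R y) = u * \<phi> x + v * \<phi> y"
    and ling: "\<And>x y u v. g (u *\<^sub>R x + v *\<^sub>R y) = u * g x + v * g y"
    and s0: "s0 \<in> U" "\<phi> s0 = m"
    and H: "\<And>u. u \<in> U \<Longrightarrow> m \<le> \<phi> u \<and> (\<phi> u = m \<longrightarrow> g s0 \<le> g u \<and> (g u = g s0 \<longrightarrow> u = s0))"
  shows "s0 extreme_point_of convex hull U"
proof -
  define K where "K = {u. m \<le> \<phi> u \<and> (\<phi> u = m \<longrightarrow> g s0 \<le> g u \<and> (g u = g s0 \<longrightarrow> u = s0))}"
  have comb: "m \<le> \<phi> c \<and> (\<phi> c = m \<longrightarrow> g s0 \<le> g c \<and> (g c = g s0 \<longrightarrow> (u = 0 \<or> x = s0) \<and> (v = 0 \<or> y = s0)))"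
    if x: "x \<in> K" and y: "y \<in> K" and uv: "u \<ge> 0" "v \<ge> 0" "u + v = 1" and c: "c = u *\<^sub>R x + v *\<^sub>R y"
    for x y u v c
  proof -
    have px: "m \<le> \<phi> x" and py: "m \<le> \<phi> y" using x y by (auto simp: K_def)
    have pc: "\<phi> c = u * \<phi> x + v * \<phi> y" "g c = u * g x + v * g y" using c lin\<phi> ling by auto
    have "u * m \<le> u * \<phi> x" "v * m \<le> v * \<phi> y" using px py uv by (auto intro: mult_left_mono)
    moreover have "u * m + v * m = m"
    proof -
      have "u * m + v * m = (u + v) * m" by (simp add: algebra_simps)
      then show ?thesis using uv by simp
    qed
    ultimately have m1: "m \<le> \<phi> c" using pc by linarith
    moreover have "g s0 \<le> g c \<and> (g c = g s0 \<longrightarrow> (u = 0 \<or> x = s0) \<and> (v = 0 \<or> y = s0))" if e: "\<phi> c = m"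
    proof -
      have "u * (\<phi> x - m) = 0" "v * (\<phi> y - m) = 0"
      proof -
        have a1: "u * (\<phi> x - m) \<ge> 0" "v * (\<phi> y - m) \<ge> 0" using px py uv by auto
        have "u * (\<phi> x - m) + v * (\<phi> y - m) = 0"
          using e pc \<open>u * m + v * m = m\<close> by (simp add: algebra_simps)
        with a1 show "u * (\<phi> x - m) = 0" "v * (\<phi> y - m) = 0" by linarith+
      qed
      then have hx: "u = 0 \<or> \<phi> x = m" and hy: "v = 0 \<or> \<phi> y = m" by auto
      have gx: "u = 0 \<or> (g s0 \<le> g x \<and> (g x = g s0 \<longrightarrow> x = s0))" using hx x by (auto simp: K_def)
      have gy: "v = 0 \<or> (g s0 \<le> g y \<and> (g y = g s0 \<longrightarrow> y = s0))" using hy y by (auto simp: K_def)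
      have b1: "u * g s0 \<le> u * g x" using gx uv by (auto intro: mult_left_mono)
      have b2: "v * g s0 \<le> v * g y" using gy uv by (auto intro: mult_left_mono)
      have "u * g s0 + v * g s0 = g s0"
      proof -
        have "u * g s0 + v * g s0 = (u + v) * g s0" by (simp add: algebra_simps)
        then show ?thesis using uv by simp
      qed
      then have g1: "g s0 \<le> g c" using b1 b2 pc by linarith
      moreover have "(u = 0 \<or> x = s0) \<and> (v = 0 \<or> y = s0)" if "g c = g s0"
      proof -
        have "u * (g x - g s0) = 0" "v * (g y - g s0) = 0"
          using b1 b2 pc that \<open>u * g s0 + v * g s0 = g s0\<close> by (simp_all add: algebra_simps)
        then show ?thesis using gx gy by auto
      qed
      ultimately show ?thesis by blast
    qed
    ultimately show ?thesis by blast
  qed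
  have convK: "convex K"
    unfolding convex_def
  proof (intro ballI allI impI)
    fix x y u v assume x: "x \<in> K" and y: "y \<in> K" and uv: "0 \<le> u" "0 \<le> v" "u + v = (1::real)"
    define c where "c = u *\<^sub>R x + v *\<^sub>R y"
    have C: "m \<le> \<phi> c \<and> (\<phi> c = m \<longrightarrow> g s0 \<le> g c \<and>
        (g c = g s0 \<longrightarrow> (u = 0 \<or> x = s0) \<and> (v = 0 \<or> y = s0)))"
      by (rule comb[OF x y uv c_def])
    have cs: "c = s0" if h: "(u = 0 \<or> x = s0) \<and> (v = 0 \<or> y = s0)"
    proof -
      have e1: "u *\<^sub>R x = u *\<^sub>R s0" using h by (cases "u = 0") simp_all
      have e2: "v *\<^sub>R y = v *\<^sub>R s0" using h by (cases "v = 0") simp_all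
      have "c = (u + v) *\<^sub>R s0" unfolding c_def e1 e2 scaleR_add_left ..
      then show ?thesis using uv by simp
    qed
    have C1: "m \<le> \<phi> c" using C by (rule conjunct1)
    have C2: "g s0 \<le> g c \<and> (g c = g s0 \<longrightarrow> c = s0)" if "\<phi> c = m"
      using C that cs by meson
    have "c \<in> K" unfolding K_def mem_Collect_eq using C1 C2 by blast
    then show "u *\<^sub>R x + v *\<^sub>R y \<in> K" unfolding c_def .
  qed
  have UK: "U \<subseteq> K" using H by (auto simp: K_def)
  have hK: "convex hull U \<subseteq> K" by (rule hull_minimal[of U K convex, OF UK convK])
  show ?thesis
    unfolding extreme_point_of_def
  proof (intro conjI ballI)
    show "s0 \<in> convex hull U" using s0(1) by (rule hull_inc)
    fix a c assume a: "a \<in> convex hull U" and c: "c \<in> convex hull U"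
    show "s0 \<notin> open_segment a c"
    proof
      assume "s0 \<in> open_segment a c"
      then obtain t where t: "a \<noteq> c" "0 < t" "t < 1" "s0 = (1 - t) *\<^sub>R a + t *\<^sub>R c"
        unfolding in_segment by blast
      have aK: "a \<in> K" and cK: "c \<in> K" using a c hK by auto
      from comb[OF aK cK _ _ _ t(4)] t s0(2) have "(1 - t = 0 \<or> a = s0) \<and> (t = 0 \<or> c = s0)" by auto
      with t show False by auto
    qed
  qed
qed

lemma nat_le_ceil: "real n \<le> r \<Longrightarrow> n \<le> nat \<lceil>r\<rceil>"
  by (metis ceiling_mono ceiling_of_nat nat_int nat_mono)

lemma newton_facts:
  fixes b :: "nat \<Rightarrow> nat \<Rightarrow> complex" and \<gamma> d n2 m2 :: nat
  assumes v1: "(real \<gamma>, real d) extreme_point_of newton_polygon b"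
    and v2: "(real n2, real m2) extreme_point_of newton_polygon b"
    and v12: "\<gamma> < n2"
    and v_left: "\<forall>v. v extreme_point_of newton_polygon b \<longrightarrow> v \<noteq> (real \<gamma>, real d) \<longrightarrow> fst v \<ge> real n2"
  shows "b \<gamma> d \<noteq> 0" and "m2 < d" and "\<And>i j. b i j \<noteq> 0 \<Longrightarrow> \<gamma> \<le> i"
    and "\<And>i j. b i j \<noteq> 0 \<Longrightarrow> real \<gamma> + (real n2 - real \<gamma>) / (real d - real m2) * real d
            \<le> real i + (real n2 - real \<gamma>) / (real d - real m2) * real j"
proof -
  show bgd: "b \<gamma> d \<noteq> 0" using ext_in_supp[OF v1] by auto
  have bnm: "b n2 m2 \<noteq> 0" using ext_in_supp[OF v2] by auto
  define i0 where "i0 = (LEAST i. \<exists>j. b i j \<noteq> 0)"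
  have ex: "\<exists>j. b i0 j \<noteq> 0" unfolding i0_def by (rule LeastI[of _ \<gamma>]) (use bgd in auto)
  have i0le: "i0 \<le> i" if "b i j \<noteq> 0" for i j unfolding i0_def by (rule Least_le) (use that in auto)
  define j0 where "j0 = (LEAST j. b i0 j \<noteq> 0)"
  have bj0: "b i0 j0 \<noteq> 0" unfolding j0_def using ex by (rule LeastI_ex)
  have j0le: "j0 \<le> j" if "b i0 j \<noteq> 0" for j unfolding j0_def by (rule Least_le) (use that in auto)
  have ext0: "(real i0, real j0) extreme_point_of newton_polygon b"
    unfolding np_NU
  proof (rule ext_crit[where \<phi> = fst and g = snd and m = "real i0"])
    show "(real i0, real j0) \<in> NU b" unfolding NU_iff using bj0 by auto
    fix u assume "u \<in> NU b"
    then obtain i j where ij: "b i j \<noteq> 0" "fst u \<ge> real i" "snd u \<ge> real j" by (auto simp: NU_iff)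
    have "i0 \<le> i" by (rule i0le[OF ij(1)])
    then have A: "real i0 \<le> fst u" using ij by linarith
    have B: "real j0 \<le> snd u \<and> (snd u = real j0 \<longrightarrow> u = (real i0, real j0))" if f: "fst u = real i0"
    proof -
      have "i = i0" using f ij \<open>i0 \<le> i\<close> by linarith
      then have "j0 \<le> j" using j0le ij(1) by blast
      then have "real j0 \<le> snd u" using ij by linarith
      moreover have "u = (real i0, real j0)" if "snd u = real j0" using that f by (simp add: prod_eq_iff)
      ultimately show ?thesis by blast
    qed
    show "real i0 \<le> fst u \<and> (fst u = real i0 \<longrightarrow> snd (real i0, real j0) \<le> snd u \<and>
          (snd u = snd (real i0, real j0) \<longrightarrow> u = (real i0, real j0)))"
      using A B by simp
  qed simp_all
  have "i0 \<le> \<gamma>" by (rule i0le[OF bgd])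
  have "(real i0, real j0) = (real \<gamma>, real d)"
  proof (rule ccontr)
    assume ne: "(real i0, real j0) \<noteq> (real \<gamma>, real d)"
    have "fst (real i0, real j0) \<ge> real n2" using v_left ext0 ne by blast
    then have "real i0 \<ge> real n2" by simp
    with \<open>i0 \<le> \<gamma>\<close> v12 show False by linarith
  qed
  then have i0g: "i0 = \<gamma>" by simp
  show N1: "\<gamma> \<le> i" if "b i j \<noteq> 0" for i j using i0le[OF that] i0g by simp
  show md: "m2 < d"
  proof (rule ccontr)
    assume "\<not> m2 < d"
    then have "(real n2, real m2) = (real \<gamma>, real d)"
      using dom_extreme[OF v2 bgd] v12 by simp
    with v12 show False by simp
  qed
  define L where "L = (real n2 - real \<gamma>) / (real d - real m2)"
  have L: "L > 0" using v12 md by (simp add: L_def)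
  have Leq: "real \<gamma> + L * real d = real n2 + L * real m2"
    using v12 md by (simp add: L_def field_simps)
  define \<psi> where "\<psi> x = real (fst x) + L * real (snd x)" for x :: "nat \<times> nat"
  show "real \<gamma> + (real n2 - real \<gamma>) / (real d - real m2) * real d
            \<le> real i + (real n2 - real \<gamma>) / (real d - real m2) * real j" if bij: "b i j \<noteq> 0" for i j
  proof (rule ccontr)
    assume "\<not> ?thesis"
    then have lt: "\<psi> (i,j) < \<psi> (\<gamma>,d)" unfolding \<psi>_def L_def by simp
    define c where "c = \<psi> (i,j)"
    define M0 where "M0 = {x. b (fst x) (snd x) \<noteq> 0 \<and> \<psi> x \<le> c}"
    have ijM0: "(i,j) \<in> M0" using bij by (simp add: M0_def c_def)
    have finM0: "finite M0"
    proof (rule finite_subset)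
      show "M0 \<subseteq> {..nat \<lceil>c\<rceil>} \<times> {..nat \<lceil>c / L\<rceil>}"
      proof
        fix x assume "x \<in> M0"
        then have x: "real (fst x) + L * real (snd x) \<le> c" by (simp add: M0_def \<psi>_def)
        have "real (fst x) \<le> c" using x L by (smt (verit) mult_nonneg_nonneg of_nat_0_le_iff)
        moreover have "real (snd x) \<le> c / L"
        proof -
          have "L * real (snd x) \<le> c" using x by simp
          then show ?thesis using L by (simp add: pos_le_divide_eq mult.commute)
        qed
        ultimately show "x \<in> {..nat \<lceil>c\<rceil>} \<times> {..nat \<lceil>c / L\<rceil>}"
          by (cases x) (auto intro: nat_le_ceil)
      qed
    qed simp
    define m where "m = Min (\<psi> ` M0)"
    have mle: "m \<le> \<psi> x" if "x \<in> M0" for x unfolding m_def using finM0 that by simp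
    have min: "m \<in> \<psi> ` M0" unfolding m_def using finM0 ijM0 by (intro Min_in) auto
    have mc: "m \<le> c" using mle[OF ijM0] by (simp add: c_def)
    define M1 where "M1 = {x \<in> M0. \<psi> x = m}"
    have finM1: "finite M1" using finM0 by (simp add: M1_def)
    have neM1: "M1 \<noteq> {}" using min by (auto simp: M1_def)
    define ist where "ist = Min (fst ` M1)"
    have "ist \<in> fst ` M1" unfolding ist_def using finM1 neM1 by (intro Min_in) auto
    then obtain s where s: "s \<in> M1" "fst s = ist" by auto
    have istle: "ist \<le> fst x" if "x \<in> M1" for x unfolding ist_def using finM1 that by simp
    have sM: "b (fst s) (snd s) \<noteq> 0" "\<psi> s = m" using s by (auto simp: M1_def M0_def)
    have ge_m: "m \<le> \<psi> (i', j')" if "b i' j' \<noteq> 0" for i' j'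
    proof (cases "(i',j') \<in> M0")
      case True then show ?thesis by (rule mle)
    next
      case False then have "\<psi> (i',j') > c" using that by (auto simp: M0_def)
      then show ?thesis using mc by linarith
    qed
    define s0 where "s0 = (real (fst s), real (snd s))"
    have ext_s: "s0 extreme_point_of newton_polygon b"
      unfolding np_NU
    proof (rule ext_crit[where \<phi> = "\<lambda>p. fst p + L * snd p" and g = fst and m = m])
      show "\<And>x y u v. fst (u *\<^sub>R x + v *\<^sub>R y) + L * snd (u *\<^sub>R x + v *\<^sub>R y) = u * (fst x + L * snd x) + v * (fst y + L * snd y)"
        by (simp add: algebra_simps)
      show "s0 \<in> NU b" unfolding NU_iff s0_def using sM by auto
      show "fst s0 + L * snd s0 = m" using sM by (simp add: s0_def \<psi>_def)
      fix u assume "u \<in> NU b"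
      then obtain i' j' where ij: "b i' j' \<noteq> 0" "fst u \<ge> real i'" "snd u \<ge> real j'" by (auto simp: NU_iff)
      have ps: "\<psi> (i',j') \<le> fst u + L * snd u"
        using ij L unfolding \<psi>_def by (simp add: add_mono mult_left_mono)
      have m1: "m \<le> fst u + L * snd u" using ge_m[OF ij(1)] ps by linarith
      moreover have "fst s0 \<le> fst u \<and> (fst u = fst s0 \<longrightarrow> u = s0)" if e: "fst u + L * snd u = m"
      proof -
        have pe: "\<psi> (i',j') = m" using ge_m[OF ij(1)] ps e by linarith
        have "fst u - real i' + L * (snd u - real j') = 0" using pe e by (simp add: \<psi>_def algebra_simps)
        moreover have "fst u - real i' \<ge> 0" "L * (snd u - real j') \<ge> 0" using ij L by auto
        ultimately have u1: "fst u = real i'" and "L * (snd u - real j') = 0" by linarith+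
        then have u2: "snd u = real j'" using L by simp
        have inM1: "(i',j') \<in> M1" using pe ij(1) mc by (simp add: M1_def M0_def)
        have "ist \<le> i'" using istle[OF inM1] by simp
        then have "fst s0 \<le> fst u" using u1 s by (simp add: s0_def)
        moreover have "u = s0" if "fst u = fst s0"
        proof -
          have ii: "i' = fst s" using that u1 by (simp add: s0_def)
          have "\<psi> (i',j') = \<psi> s" using pe sM by simp
          then have "L * real j' = L * real (snd s)" using ii by (simp add: \<psi>_def)
          then have "j' = snd s" using L by simp
          then show ?thesis using ii u1 u2 by (simp add: s0_def prod_eq_iff)
        qed
        ultimately show ?thesis by blast
      qed
      ultimately show "m \<le> fst u + L * snd u \<and> (fst u + L * snd u = m \<longrightarrow> fst s0 \<le> fst u \<and> (fst u = fst s0 \<longrightarrow> u = s0))"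
        by blast
    qed (simp add: algebra_simps)
    have psm: "m < real \<gamma> + L * real d" using mc lt by (simp add: c_def \<psi>_def)
    have "s0 \<noteq> (real \<gamma>, real d)"
    proof
      assume "s0 = (real \<gamma>, real d)"
      then have "m = real \<gamma> + L * real d" using sM by (simp add: s0_def \<psi>_def prod_eq_iff)
      with psm show False by simp
    qed
    then have fs: "fst s0 \<ge> real n2" using v_left ext_s by blast
    define A where "A = (real \<gamma>, real d)"
    define t where "t = (real n2 - real \<gamma>) / (fst s0 - real \<gamma>)"
    have t: "0 < t" "t \<le> 1" using fs v12 by (auto simp: t_def)
    define Q where "Q = (1 - t) *\<^sub>R A + t *\<^sub>R s0"
    have AN: "A \<in> newton_polygon b" using NU_sub bgd unfolding A_def by (force simp: NU_iff)
    have sN: "s0 \<in> newton_polygon b" using ext_s by (simp add: extreme_point_of_def)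
    have QN: "Q \<in> newton_polygon b"
      unfolding Q_def np_NU
      by (rule convexD[OF convex_convex_hull]) (use AN sN t in \<open>auto simp: np_NU\<close>)
    have fQ: "fst Q = real n2"
    proof -
      have ne: "fst s0 - real \<gamma> \<noteq> 0" using fs v12 by simp
      have tt: "t * (fst s0 - real \<gamma>) = real n2 - real \<gamma>" unfolding t_def using ne by simp
      have "fst Q = (1 - t) * real \<gamma> + t * fst s0" by (simp add: Q_def A_def)
      also have "\<dots> = real \<gamma> + t * (fst s0 - real \<gamma>)" by (simp add: algebra_simps)
      finally show ?thesis using tt by simp
    qed
    have pQ: "fst Q + L * snd Q = (1 - t) * (real \<gamma> + L * real d) + t * m"
    proof -
      have "fst Q + L * snd Q = (1 - t) * (real \<gamma> + L * real d) + t * (real (fst s) + L * real (snd s))"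
        by (simp add: Q_def A_def s0_def algebra_simps)
      then show ?thesis using sM by (simp add: \<psi>_def)
    qed
    have "t * m < t * (real \<gamma> + L * real d)" using t psm by (intro mult_strict_left_mono) auto
    then have "(1 - t) * (real \<gamma> + L * real d) + t * m < real \<gamma> + L * real d"
      by (simp add: algebra_simps)
    then have "snd Q < real m2" using pQ fQ Leq L by (smt (verit) mult_less_cancel_left_pos)
    define e where "e = real m2 - snd Q"
    have e: "e > 0" using \<open>snd Q < real m2\<close> by (simp add: e_def)
    define Q' where "Q' = (0, 2 * e) + Q"
    have Q'N: "Q' \<in> newton_polygon b" unfolding Q'_def by (rule np_upward[OF QN]) (use e in auto)
    have "Q \<noteq> Q'" using e by (simp add: Q'_def prod_eq_iff)
    moreover have "(real n2, real m2) = midpoint Q Q'"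
      using fQ by (simp add: Q'_def midpoint_def e_def prod_eq_iff field_simps)
    ultimately show False using not_extreme_mid[OF QN Q'N] v2 by blast
  qed
qed

lemma gamma_seq_0: "gamma_seq \<gamma> \<delta> d 0 = 0" by (simp add: gamma_seq_def)

lemma gamma_seq_Suc: "gamma_seq \<gamma> \<delta> d (Suc n) = \<delta>^n * \<gamma> + d * gamma_seq \<gamma> \<delta> d n"
proof -
  have "(\<Sum>k<Suc n. \<delta> ^ (Suc n - 1 - k) * d ^ k) = \<delta> ^ n + (\<Sum>k<n. \<delta> ^ (Suc n - 1 - Suc k) * d ^ Suc k)"
    by (subst sum.lessThan_Suc_shift) simp
  also have "(\<Sum>k<n. \<delta> ^ (Suc n - 1 - Suc k) * d ^ Suc k) = d * (\<Sum>k<n. \<delta> ^ (n - 1 - k) * d ^ k)"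
    by (simp add: sum_distrib_left mult_ac)
  finally show ?thesis unfolding gamma_seq_def by (simp add: algebra_simps)
qed

lemma gamma_real: "real (gamma_seq \<gamma> \<delta> d n) * (real \<delta> - real d) = real \<gamma> * (real \<delta> ^ n - real d ^ n)"
proof (induction n)
  case 0 then show ?case by (simp add: gamma_seq_0)
next
  case (Suc n)
  have "real (gamma_seq \<gamma> \<delta> d (Suc n)) * (real \<delta> - real d)
     = real \<delta> ^ n * real \<gamma> * (real \<delta> - real d) + real d * (real (gamma_seq \<gamma> \<delta> d n) * (real \<delta> - real d))"
    by (simp add: gamma_seq_Suc algebra_simps)
  also have "\<dots> = real \<gamma> * (real \<delta> ^ Suc n - real d ^ Suc n)" unfolding Suc.IH by (simp add: algebra_simps)
  finally show ?case .
qed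

lemma kle_trans: "kle L x y \<Longrightarrow> kle L y z \<Longrightarrow> kle L x z"
  by (auto simp: kle_def)

lemma zonly_pow:
  assumes "\<forall>x. A x \<noteq> 0 \<longrightarrow> snd x = 0" "pow2 A k e \<noteq> 0"
  shows "snd e = 0"
  using assms(2)
proof (induction k arbitrary: e)
  case 0 then show ?case by (simp add: one2_def split: if_splits)
next
  case (Suc k)
  from mul2_nz[of A "pow2 A k" e] Suc.prems obtain x y where "A x \<noteq> 0" "pow2 A k y \<noteq> 0" "e = padd x y" by auto
  moreover have "snd x = 0" using assms(1) \<open>A x \<noteq> 0\<close> by blast
  moreover have "snd y = 0" using Suc.IH \<open>pow2 A k y \<noteq> 0\<close> by blast
  ultimately show ?case by (simp add: padd_def)
qed

definition pa :: "(nat \<Rightarrow> complex) \<Rightarrow> arr" where "pa a x = (if snd x = 0 then a (fst x) else 0)"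
definition qb :: "(nat \<Rightarrow> nat \<Rightarrow> complex) \<Rightarrow> arr" where "qb b x = b (fst x) (snd x)"
definition zarr :: arr where "zarr x = (if x = (1,0) then 1 else 0)"
definition warr :: arr where "warr x = (if x = (0,1) then 1 else 0)"

lemma lead_P:
  assumes P1: "\<forall>x. P x \<noteq> 0 \<longrightarrow> snd x = 0 \<and> N \<le> fst x" and P2: "P (N,0) \<noteq> 0"
  shows "leadk L P (N,0)"
  unfolding leadk_def
proof (intro conjI allI impI)
  show "P (N,0) \<noteq> 0" by fact
  fix x assume "P x \<noteq> 0"
  with P1 have "snd x = 0 \<and> N \<le> fst x" by blast
  then show "kle L (N,0) x" by (auto simp: kle_def wt_def)
qed

lemma P_step:
  assumes a_low: "\<forall>k<\<delta>. a k = 0" and a_lead: "a \<delta> \<noteq> 0" and d1: "\<delta> \<ge> 1"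
    and P1: "\<forall>x. P x \<noteq> 0 \<longrightarrow> snd x = 0 \<and> \<delta>^n \<le> fst x" and P2: "P (\<delta>^n,0) \<noteq> 0"
  shows "\<forall>x. comp2 (pa a) P Q x \<noteq> 0 \<longrightarrow> snd x = 0 \<and> \<delta>^(Suc n) \<le> fst x"
    and "comp2 (pa a) P Q (\<delta>^(Suc n), 0) \<noteq> 0"
proof -
  have zo: "\<forall>x. P x \<noteq> 0 \<longrightarrow> snd x = 0" using P1 by auto
  have wbP: "wb 0 P (real \<delta>^n)" using P1 by (auto simp: wb_def wt_def)
  have wbpow: "real k * real \<delta>^n \<le> real (fst e)" if "pow2 P k e \<noteq> 0" for k e
  proof -
    have "wb 0 (pow2 P k) (real k * real \<delta>^n)" by (rule wb_pow2[OF wbP]) simp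
    then have "real k * real \<delta>^n \<le> wt 0 e" using that unfolding wb_def by blast
    then show ?thesis by (simp add: wt_def)
  qed
  have tm: "pow2 P (fst x) e \<noteq> 0 \<and> snd x = 0 \<and> \<delta> \<le> fst x"
    if "pa a x * mul2 (pow2 P (fst x)) (pow2 Q (snd x)) e \<noteq> 0" for x e
  proof -
    have s: "snd x = 0" and ax: "a (fst x) \<noteq> 0" using that by (auto simp: pa_def split: if_splits)
    have "\<delta> \<le> fst x" using a_low ax by (meson not_le)
    moreover have "pow2 P (fst x) e \<noteq> 0" using that s by (simp add: mul2_one2)
    ultimately show ?thesis using s by simp
  qed
  show "\<forall>x. comp2 (pa a) P Q x \<noteq> 0 \<longrightarrow> snd x = 0 \<and> \<delta>^(Suc n) \<le> fst x"
  proof (intro allI impI)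
    fix e assume "comp2 (pa a) P Q e \<noteq> 0"
    then obtain x where "pa a x \<noteq> 0" "mul2 (pow2 P (fst x)) (pow2 Q (snd x)) e \<noteq> 0"
      using comp2_nz by blast
    then have t: "pow2 P (fst x) e \<noteq> 0" "\<delta> \<le> fst x" using tm[of x e] by auto
    have "snd e = 0" by (rule zonly_pow[OF zo t(1)])
    moreover have "real (fst x) * real \<delta>^n \<le> real (fst e)" by (rule wbpow[OF t(1)])
    moreover have "real \<delta> * real \<delta>^n \<le> real (fst x) * real \<delta>^n" using t(2) by (intro mult_right_mono) auto
    ultimately have "real (\<delta>^Suc n) \<le> real (fst e)" by simp
    then show "snd e = 0 \<and> \<delta>^(Suc n) \<le> fst e" using \<open>snd e = 0\<close> by linarith
  qed
  let ?e = "(\<delta>^(Suc n), 0::nat)"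
  have box: "(\<delta>, 0) \<in> {..fst ?e + snd ?e}\<times>{..fst ?e + snd ?e}"
    using d1 by (simp add: self_le_power)
  have others: "pa a x * mul2 (pow2 P (fst x)) (pow2 Q (snd x)) ?e = 0" if "x \<noteq> (\<delta>,0)" for x
  proof (rule ccontr)
    assume nz: "pa a x * mul2 (pow2 P (fst x)) (pow2 Q (snd x)) ?e \<noteq> 0"
    from tm[OF nz] have t: "pow2 P (fst x) ?e \<noteq> 0" "snd x = 0" "\<delta> \<le> fst x" by auto
    with that have "\<delta> < fst x" by (cases x) auto
    have "real (fst x) * real \<delta>^n \<le> real (\<delta>^Suc n)" using wbpow[OF t(1)] by simp
    moreover have "real \<delta> * real \<delta>^n < real (fst x) * real \<delta>^n"
      using \<open>\<delta> < fst x\<close> d1 by (intro mult_strict_right_mono) auto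
    ultimately show False by simp
  qed
  have "comp2 (pa a) P Q ?e = pa a (\<delta>,0) * mul2 (pow2 P \<delta>) (pow2 Q 0) ?e"
    using comp2_single[OF box others] by simp
  also have "\<dots> = a \<delta> * pow2 P \<delta> ?e" by (simp add: pa_def mul2_one2)
  also have "pow2 P \<delta> ?e = (P (\<delta>^n,0))^\<delta>"
  proof -
    have "psc \<delta> (\<delta>^n, 0) = ?e" by (simp add: psc_def)
    with pow2_leadk[OF lead_P[OF P1 P2, of 1], of \<delta>] show ?thesis by simp
  qed
  finally show "comp2 (pa a) P Q ?e \<noteq> 0" using a_lead P2 by simp
qed

lemma newton_ineq:
  fixes i j \<gamma> d :: nat and L W D :: real
  assumes i: "\<gamma> \<le> i" and N2: "real \<gamma> + L * real d \<le> real i + L * real j"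
    and W: "0 \<le> W" "W \<le> L * D" and L: "L > 0" and D: "D > 0"
  shows "D * real \<gamma> + W * real d \<le> D * real i + W * real j"
proof -
  have h1: "(D - W / L) * (real i - real \<gamma>) \<ge> 0"
  proof -
    have "W / L \<le> D" using W L by (simp add: pos_divide_le_eq mult.commute)
    then show ?thesis using i by simp
  qed
  have h2: "(W / L) * ((real i - real \<gamma>) + L * (real j - real d)) \<ge> 0"
    using W L N2 by (intro mult_nonneg_nonneg) (auto simp: algebra_simps)
  have eq: "D * real i + W * real j - (D * real \<gamma> + W * real d)
      = (D - W / L) * (real i - real \<gamma>) + (W / L) * ((real i - real \<gamma>) + L * (real j - real d))"
    using L by (simp add: field_simps)
  show ?thesis using h1 h2 eq by linarith
qed

lemma newton_eq:
  fixes i j \<gamma> d :: nat and W D :: real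
  assumes i: "\<gamma> \<le> i" and e: "D * real \<gamma> + W * real d = D * real i + W * real j"
    and W: "W > 0" and D: "D > 0"
  shows "j \<le> d \<and> (j = d \<longrightarrow> i = \<gamma>)"
proof -
  have "D * (real i - real \<gamma>) + W * (real j - real d) = 0" using e by (simp add: algebra_simps)
  moreover have "D * (real i - real \<gamma>) \<ge> 0" using i D by simp
  ultimately have "W * (real j - real d) \<le> 0" by linarith
  then have jd: "j \<le> d" using W by (simp add: mult_le_0_iff)
  moreover have "i = \<gamma>" if "j = d"
  proof -
    have "D * real \<gamma> = D * real i" using e that by simp
    then have "real \<gamma> = real i" using D by simp
    then show ?thesis by simp
  qed
  ultimately show ?thesis by blast
qed

lemma Q_step:
  fixes b :: "nat \<Rightarrow> nat \<Rightarrow> complex" and I :: "real set" and P Q :: arr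
  assumes N1: "\<And>i j. b i j \<noteq> 0 \<Longrightarrow> \<gamma> \<le> i"
    and N2: "\<And>i j. b i j \<noteq> 0 \<Longrightarrow> real \<gamma> + L * real d \<le> real i + L * real j"
    and bgd: "b \<gamma> d \<noteq> 0" and L: "L > 0" and d1: "d \<ge> 1" and \<delta>1: "\<delta> \<ge> 1"
    and LI: "L \<in> I"
    and Iprop: "\<And>l. l \<in> I \<Longrightarrow> 0 < l \<and> l \<le> L \<and> real (gamma_seq \<gamma> \<delta> d n) + l * real d ^ n \<le> l * real \<delta> ^ n"
    and P1: "\<forall>x. P x \<noteq> 0 \<longrightarrow> snd x = 0 \<and> \<delta>^n \<le> fst x" and P2: "P (\<delta>^n,0) \<noteq> 0"
    and Q3: "\<forall>l\<in>I. wb l Q (real (gamma_seq \<gamma> \<delta> d n) + l * real d ^ n)"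
    and Q4: "leadk L Q (gamma_seq \<gamma> \<delta> d n, d^n)"
  shows "\<forall>l\<in>I. wb l (comp2 (qb b) P Q) (real (gamma_seq \<gamma> \<delta> d (Suc n)) + l * real d ^ Suc n)"
    and "leadk L (comp2 (qb b) P Q) (gamma_seq \<gamma> \<delta> d (Suc n), d^Suc n)"
proof -
  let ?g = "gamma_seq \<gamma> \<delta> d n"
  define W where "W l = real ?g + l * real d ^ n" for l
  have Wrec: "real (gamma_seq \<gamma> \<delta> d (Suc n)) + l * real d ^ Suc n = real \<delta> ^ n * real \<gamma> + W l * real d" for l
    by (simp add: W_def gamma_seq_Suc algebra_simps)
  have D: "real \<delta> ^ n > 0" using \<delta>1 by simp
  have Wb: "0 \<le> W l \<and> W l \<le> L * real \<delta> ^ n" if "l \<in> I" for l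
  proof -
    have l: "0 < l" "l \<le> L" "W l \<le> l * real \<delta> ^ n" using Iprop[OF that] by (auto simp: W_def)
    have "l * real \<delta> ^ n \<le> L * real \<delta> ^ n" using l D by (intro mult_right_mono) auto
    moreover have "0 \<le> W l" using l unfolding W_def by simp
    ultimately show ?thesis using l by linarith
  qed
  have wbP: "wb l P (real \<delta> ^ n)" for l
    unfolding wb_def
  proof (intro allI impI)
    fix x assume "P x \<noteq> 0"
    with P1 have "snd x = 0 \<and> \<delta>^n \<le> fst x" by blast
    then show "real \<delta> ^ n \<le> wt l x" by (simp add: wt_def)
  qed
  show "\<forall>l\<in>I. wb l (comp2 (qb b) P Q) (real (gamma_seq \<gamma> \<delta> d (Suc n)) + l * real d ^ Suc n)"
  proof
    fix l assume lI: "l \<in> I"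
    have l0: "0 \<le> l" using Iprop[OF lI] by simp
    show "wb l (comp2 (qb b) P Q) (real (gamma_seq \<gamma> \<delta> d (Suc n)) + l * real d ^ Suc n)"
      unfolding wb_def
    proof (intro allI impI)
      fix e assume "comp2 (qb b) P Q e \<noteq> 0"
      then obtain x where x: "qb b x \<noteq> 0" "mul2 (pow2 P (fst x)) (pow2 Q (snd x)) e \<noteq> 0"
        using comp2_nz by blast
      have wQ: "wb l Q (W l)" using Q3 lI by (simp add: W_def)
      have "wb l (mul2 (pow2 P (fst x)) (pow2 Q (snd x))) (real (fst x) * real \<delta> ^ n + real (snd x) * W l)"
        by (intro wb_mul2 wb_pow2 wbP wQ l0)
      then have we: "real (fst x) * real \<delta> ^ n + real (snd x) * W l \<le> wt l e"
        using x(2) unfolding wb_def by blast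
      have bx: "b (fst x) (snd x) \<noteq> 0" using x(1) by (simp add: qb_def)
      have "real \<delta> ^ n * real \<gamma> + W l * real d \<le> real \<delta> ^ n * real (fst x) + W l * real (snd x)"
        using newton_ineq[OF N1[OF bx] N2[OF bx] _ _ L D] Wb[OF lI] by blast
      then show "real (gamma_seq \<gamma> \<delta> d (Suc n)) + l * real d ^ Suc n \<le> wt l e"
        unfolding Wrec using we by (simp add: mult.commute)
    qed
  qed
  have leadP: "leadk L P (\<delta>^n,0)" by (rule lead_P[OF P1 P2])
  define E where "E x = padd (psc (fst x) (\<delta>^n,0)) (psc (snd x) (?g, d^n))" for x :: "nat \<times> nat"
  have lead_x: "leadk L (mul2 (pow2 P (fst x)) (pow2 Q (snd x))) (E x) \<and>
      mul2 (pow2 P (fst x)) (pow2 Q (snd x)) (E x) = P (\<delta>^n,0) ^ fst x * Q (?g, d^n) ^ snd x" for x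
  proof -
    have a: "leadk L (pow2 P (fst x)) (psc (fst x) (\<delta>^n,0))" "pow2 P (fst x) (psc (fst x) (\<delta>^n,0)) = P (\<delta>^n,0) ^ fst x"
      using pow2_leadk[OF leadP, of "fst x"] by auto
    have b: "leadk L (pow2 Q (snd x)) (psc (snd x) (?g, d^n))" "pow2 Q (snd x) (psc (snd x) (?g, d^n)) = Q (?g, d^n) ^ snd x"
      using pow2_leadk[OF Q4, of "snd x"] by auto
    show ?thesis using mul2_leadk[OF a(1) b(1)] a(2) b(2) by (simp add: E_def)
  qed
  have wtE: "wt L (E x) = real \<delta> ^ n * real (fst x) + W L * real (snd x)" for x
    by (simp add: E_def padd_def psc_def W_def wt_def algebra_simps)
  have sndE: "snd (E x) = snd x * d^n" for x by (simp add: E_def padd_def psc_def)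
  let ?es = "(gamma_seq \<gamma> \<delta> d (Suc n), d^Suc n)"
  have Eg: "E (\<gamma>,d) = ?es" by (simp add: E_def padd_def psc_def gamma_seq_Suc mult_ac)
  have WL: "W L > 0"
  proof -
    have "L * real d ^ n > 0" using L d1 by simp
    then show ?thesis unfolding W_def by simp
  qed
  have ineq: "real \<delta> ^ n * real \<gamma> + W L * real d \<le> real \<delta> ^ n * real (fst x) + W L * real (snd x)"
    if bx: "b (fst x) (snd x) \<noteq> 0" for x
    using newton_ineq[OF N1[OF bx] N2[OF bx] _ _ L D] Wb[OF LI] by blast
  have A: "kle L ?es (E x)" if "qb b x \<noteq> 0" for x
  proof -
    have bx: "b (fst x) (snd x) \<noteq> 0" using that by (simp add: qb_def)
    have wes: "wt L ?es = real \<delta> ^ n * real \<gamma> + W L * real d" using wtE[of "(\<gamma>,d)"] Eg by simp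
    show ?thesis
    proof (cases "wt L ?es = wt L (E x)")
      case True
      then have "real \<delta> ^ n * real \<gamma> + W L * real d = real \<delta> ^ n * real (fst x) + W L * real (snd x)"
        using wes wtE[of x] by simp
      from newton_eq[OF N1[OF bx] this WL D] have "snd x \<le> d" by simp
      then have "snd x * d^n \<le> d * d^n" by simp
      then show ?thesis using True sndE[of x] by (simp add: kle_def)
    next
      case False
      then show ?thesis using ineq[OF bx] wes wtE[of x] by (simp add: kle_def)
    qed
  qed
  have B: "\<not> kle L (E x) ?es" if "qb b x \<noteq> 0" "x \<noteq> (\<gamma>,d)" for x
  proof
    assume k: "kle L (E x) ?es"
    have bx: "b (fst x) (snd x) \<noteq> 0" using that by (simp add: qb_def)
    have wes: "wt L ?es = real \<delta> ^ n * real \<gamma> + W L * real d" using wtE[of "(\<gamma>,d)"] Eg by simp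
    have eqw: "wt L (E x) = wt L ?es" and sl: "d^Suc n \<le> snd (E x)"
      using k ineq[OF bx] wes wtE[of x] unfolding kle_def by auto
    then have "real \<delta> ^ n * real \<gamma> + W L * real d = real \<delta> ^ n * real (fst x) + W L * real (snd x)"
      using wes wtE[of x] by simp
    from newton_eq[OF N1[OF bx] this WL D] have ne: "snd x \<le> d \<and> (snd x = d \<longrightarrow> fst x = \<gamma>)" .
    have "d * d^n \<le> snd x * d^n" using sl sndE[of x] by simp
    then have "d \<le> snd x" using d1 by simp
    with ne that(2) show False by (cases x) auto
  qed
  have box: "(\<gamma>, d) \<in> {..fst ?es + snd ?es}\<times>{..fst ?es + snd ?es}"
  proof -
    have "1 \<le> \<delta>^n" using \<delta>1 by simp
    then have "\<gamma> \<le> \<delta>^n * \<gamma>" by simp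
    then have "\<gamma> \<le> gamma_seq \<gamma> \<delta> d (Suc n)" unfolding gamma_seq_Suc by linarith
    moreover have "d \<le> d ^ Suc n" using d1 by (simp add: self_le_power)
    ultimately have h1: "\<gamma> \<le> gamma_seq \<gamma> \<delta> d (Suc n) + d ^ Suc n"
      and h2: "d \<le> gamma_seq \<gamma> \<delta> d (Suc n) + d ^ Suc n" by linarith+
    show ?thesis unfolding mem_Times_iff atMost_iff fst_conv snd_conv mem_Collect_eq by (intro conjI h1 h2)
  qed
  have others: "qb b x * mul2 (pow2 P (fst x)) (pow2 Q (snd x)) ?es = 0" if "x \<noteq> (\<gamma>,d)" for x
  proof (cases "qb b x = 0")
    case False
    have "mul2 (pow2 P (fst x)) (pow2 Q (snd x)) ?es = 0"
    proof (rule ccontr)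
      assume "mul2 (pow2 P (fst x)) (pow2 Q (snd x)) ?es \<noteq> 0"
      with lead_x[of x] have "kle L (E x) ?es" unfolding leadk_def by blast
      with B[OF False that] show False by simp
    qed
    then show ?thesis by simp
  qed simp
  have val: "comp2 (qb b) P Q ?es = qb b (\<gamma>,d) * mul2 (pow2 P \<gamma>) (pow2 Q d) ?es"
    using comp2_single[OF box others] by simp
  also have "\<dots> = b \<gamma> d * (P (\<delta>^n,0) ^ \<gamma> * Q (?g, d^n) ^ d)"
    using lead_x[of "(\<gamma>,d)"] Eg by (simp add: qb_def)
  finally have nz: "comp2 (qb b) P Q ?es \<noteq> 0"
    using bgd P2 Q4 by (simp add: leadk_def)
  show "leadk L (comp2 (qb b) P Q) ?es"
    unfolding leadk_def
  proof (intro conjI allI impI)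
    show "comp2 (qb b) P Q ?es \<noteq> 0" by (rule nz)
    fix e assume "comp2 (qb b) P Q e \<noteq> 0"
    then obtain x where x: "qb b x \<noteq> 0" "mul2 (pow2 P (fst x)) (pow2 Q (snd x)) e \<noteq> 0"
      using comp2_nz by blast
    have "kle L (E x) e" using lead_x[of x] x(2) unfolding leadk_def by blast
    with A[OF x(1)] show "kle L ?es e" by (rule kle_trans)
  qed
qed

primrec PQ :: "(nat \<Rightarrow> complex) \<Rightarrow> (nat \<Rightarrow> nat \<Rightarrow> complex) \<Rightarrow> nat \<Rightarrow> arr \<times> arr" where
  "PQ a b 0 = (zarr, warr)"
| "PQ a b (Suc n) = (comp2 (pa a) (fst (PQ a b n)) (snd (PQ a b n)), comp2 (qb b) (fst (PQ a b n)) (snd (PQ a b n)))"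

lemma formal_inv:
  fixes b :: "nat \<Rightarrow> nat \<Rightarrow> complex" and I :: "real set"
  assumes a_low: "\<forall>k<\<delta>. a k = 0" and a_lead: "a \<delta> \<noteq> 0"
    and N1: "\<And>i j. b i j \<noteq> 0 \<Longrightarrow> \<gamma> \<le> i"
    and N2: "\<And>i j. b i j \<noteq> 0 \<Longrightarrow> real \<gamma> + L * real d \<le> real i + L * real j"
    and bgd: "b \<gamma> d \<noteq> 0" and L: "L > 0" and d1: "d \<ge> 1" and \<delta>1: "\<delta> \<ge> 1"
    and LI: "L \<in> I"
    and Iprop: "\<And>l n. l \<in> I \<Longrightarrow> 0 < l \<and> l \<le> L \<and> real (gamma_seq \<gamma> \<delta> d n) + l * real d ^ n \<le> l * real \<delta> ^ n"
  shows "(\<forall>x. fst (PQ a b n) x \<noteq> 0 \<longrightarrow> snd x = 0 \<and> \<delta>^n \<le> fst x) \<and> fst (PQ a b n) (\<delta>^n,0) \<noteq> 0 \<and>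
    (\<forall>l\<in>I. wb l (snd (PQ a b n)) (real (gamma_seq \<gamma> \<delta> d n) + l * real d ^ n)) \<and>
    leadk L (snd (PQ a b n)) (gamma_seq \<gamma> \<delta> d n, d^n)"
proof (induction n)
  case 0
  have "\<forall>x. zarr x \<noteq> 0 \<longrightarrow> snd x = 0 \<and> 1 \<le> fst x" by (simp add: zarr_def)
  moreover have "zarr (1,0) \<noteq> 0" by (simp add: zarr_def)
  moreover have "\<forall>l\<in>I. wb l warr (0 + l * 1)" by (auto simp: wb_def warr_def wt_def)
  moreover have "leadk L warr (0, 1)" by (auto simp: leadk_def warr_def kle_def)
  ultimately show ?case by (simp add: gamma_seq_0)
next
  case (Suc n)
  let ?P = "fst (PQ a b n)" and ?Q = "snd (PQ a b n)"
  from Suc.IH have P1: "\<forall>x. ?P x \<noteq> 0 \<longrightarrow> snd x = 0 \<and> \<delta>^n \<le> fst x" and P2: "?P (\<delta>^n,0) \<noteq> 0"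
    and Q3: "\<forall>l\<in>I. wb l ?Q (real (gamma_seq \<gamma> \<delta> d n) + l * real d ^ n)"
    and Q4: "leadk L ?Q (gamma_seq \<gamma> \<delta> d n, d^n)" by blast+
  note Ps = P_step[OF a_low a_lead \<delta>1 P1 P2, of ?Q]
  have Qs: "\<forall>l\<in>I. wb l (comp2 (qb b) ?P ?Q) (real (gamma_seq \<gamma> \<delta> d (Suc n)) + l * real d ^ Suc n)"
    "leadk L (comp2 (qb b) ?P ?Q) (gamma_seq \<gamma> \<delta> d (Suc n), d^Suc n)"
    using Q_step[where b=b and \<gamma>=\<gamma> and L=L and d=d and \<delta>=\<delta> and I=I and n=n and P="?P" and Q="?Q",
        OF N1 N2 bgd L d1 \<delta>1 LI Iprop P1 P2 Q3 Q4] by auto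
  show ?case using Ps Qs by simp
qed

lemma rep_mono: "rep c g r \<Longrightarrow> 0 < r' \<Longrightarrow> r' \<le> r \<Longrightarrow> rep c g r'"
  unfolding rep_def by auto

lemma rep_cong: "rep c g r \<Longrightarrow> (\<And>z w. g z w = g' z w) \<Longrightarrow> rep c g' r"
  unfolding rep_def by auto

lemma rep_zarr: "rep zarr (\<lambda>z w. z) 1"
proof (rule hs_rep)
  fix z w :: complex
  show "hs zarr z w z" unfolding hs_def
    by (rule has_sum_finite_neutralI[of "{(1,0)}"]) (auto simp: zarr_def)
qed simp

lemma rep_warr: "rep warr (\<lambda>z w. w) 1"
proof (rule hs_rep)
  fix z w :: complex
  show "hs warr z w w" unfolding hs_def
    by (rule has_sum_finite_neutralI[of "{(0,1)}"]) (auto simp: warr_def)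
qed simp

lemma rep_pa:
  assumes "germ_series1 a p"
  shows "\<exists>r. rep (pa a) (\<lambda>z w. p z) r"
proof -
  obtain r where r: "r > 0" and S: "\<And>z. norm z < r \<Longrightarrow> (\<lambda>k. a k * z^k) sums p z"
    using assms unfolding germ_series1_def by blast
  have "rep (pa a) (\<lambda>z w. p z) (r/2)"
  proof (rule hs_rep)
    show "0 < r / 2" using r by simp
    fix z w :: complex assume z: "norm z < r / 2" and w: "norm w < r / 2"
    define x where "x = complex_of_real (3 * r / 4)"
    have nx: "norm x = 3 * r / 4" using r by (simp add: x_def)
    have "summable (\<lambda>k. a k * x^k)" using S[of x] nx r by (simp add: sums_iff)
    moreover have "norm z < norm x" using z nx r by simp
    ultimately have sn: "summable (\<lambda>k. norm (a k * z ^ k))" by (rule powser_insidea)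
    have hs1: "((\<lambda>k. a k * z^k) has_sum p z) UNIV"
      by (rule norm_summable_imp_has_sum[OF sn S]) (use z r in simp)
    define g where "g x = pa a x * z ^ fst x * w ^ snd x" for x :: "nat \<times> nat"
    have inj: "inj_on (\<lambda>k. (k, 0::nat)) UNIV" by (auto simp: inj_on_def)
    have "((g \<circ> (\<lambda>k. (k, 0::nat))) has_sum p z) UNIV"
      using hs1 by (simp add: g_def pa_def o_def)
    then have "(g has_sum p z) (range (\<lambda>k. (k, 0::nat)))"
      using has_sum_reindex[OF inj] by blast
    moreover have "(g has_sum p z) (range (\<lambda>k. (k, 0::nat))) \<longleftrightarrow> (g has_sum p z) UNIV"
    proof (rule has_sum_cong_neutral)
      fix y :: "nat \<times> nat" assume "y \<in> UNIV - range (\<lambda>k. (k, 0::nat))"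
      then have "snd y \<noteq> 0" by (cases y) auto
      then show "g y = 0" by (simp add: g_def pa_def)
    qed auto
    ultimately show "hs (pa a) z w (p z)" unfolding hs_def g_def by simp
  qed
  then show ?thesis by blast
qed

lemma rep_qb:
  assumes "germ_series2 b q"
  shows "\<exists>r. rep (qb b) q r"
  using assms unfolding germ_series2_def rep_def by (auto simp: qb_def case_prod_unfold)

lemma skew_0: "skew_iter p q 0 zw = zw" by (simp add: skew_iter_def)

lemma skew_Suc: "skew_iter p q (Suc n) zw =
   (p (fst (skew_iter p q n zw)), q (fst (skew_iter p q n zw)) (snd (skew_iter p q n zw)))"
  by (simp add: skew_iter_def case_prod_unfold)

lemma analytic:
  assumes rpa: "rep (pa a) (\<lambda>z w. p z) rp" and rqb: "rep (qb b) q rq"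
    and z0: "\<And>n. fst (PQ a b n) (0,0) = 0 \<and> snd (PQ a b n) (0,0) = 0"
  shows "\<exists>r. rep (fst (PQ a b n)) (\<lambda>z w. fst (skew_iter p q n (z,w))) r \<and>
             rep (snd (PQ a b n)) (\<lambda>z w. snd (skew_iter p q n (z,w))) r"
proof (induction n)
  case 0
  have "rep (fst (PQ a b 0)) (\<lambda>z w. fst (skew_iter p q 0 (z,w))) 1"
    using rep_zarr by (simp add: skew_0)
  moreover have "rep (snd (PQ a b 0)) (\<lambda>z w. snd (skew_iter p q 0 (z,w))) 1"
    using rep_warr by (simp add: skew_0)
  ultimately show ?case by blast
next
  case (Suc n)
  then obtain r where rP: "rep (fst (PQ a b n)) (\<lambda>z w. fst (skew_iter p q n (z,w))) r"
    and rQ: "rep (snd (PQ a b n)) (\<lambda>z w. snd (skew_iter p q n (z,w))) r" by blast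
  have P0: "fst (PQ a b n) (0,0) = 0" and Q0: "snd (PQ a b n) (0,0) = 0" using z0 by auto
  obtain r1 where r1: "rep (comp2 (pa a) (fst (PQ a b n)) (snd (PQ a b n)))
      (\<lambda>z w. p (fst (skew_iter p q n (z,w)))) r1"
    using comp_rep[OF rpa rP rQ P0 Q0] by auto
  obtain r2 where r2: "rep (comp2 (qb b) (fst (PQ a b n)) (snd (PQ a b n)))
      (\<lambda>z w. q (fst (skew_iter p q n (z,w))) (snd (skew_iter p q n (z,w)))) r2"
    using comp_rep[OF rqb rP rQ P0 Q0] by auto
  have pos: "r1 > 0" "r2 > 0" using r1 r2 by (auto simp: rep_def)
  define r' where "r' = min r1 r2"
  have r': "0 < r'" "r' \<le> r1" "r' \<le> r2" using pos by (auto simp: r'_def)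
  have "rep (fst (PQ a b (Suc n))) (\<lambda>z w. fst (skew_iter p q (Suc n) (z,w))) r'"
    using rep_mono[OF r1 r'(1,2)] by (simp add: skew_Suc)
  moreover have "rep (snd (PQ a b (Suc n))) (\<lambda>z w. snd (skew_iter p q (Suc n) (z,w))) r'"
    using rep_mono[OF r2 r'(1,3)] by (simp add: skew_Suc)
  ultimately show ?case by blast
qed

theorem theorem5p1:
  fixes p :: "complex \<Rightarrow> complex" and q :: "complex \<Rightarrow> complex \<Rightarrow> complex"
    and a :: "nat \<Rightarrow> complex" and b :: "nat \<Rightarrow> nat \<Rightarrow> complex"
    and \<delta> \<gamma> d n2 m2 :: nat
  assumes p_germ: "germ_series1 a p"
    and q_germ: "germ_series2 b q"
    and \<delta>_ge: "\<delta> \<ge> 1"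
    and a_low: "\<forall>k<\<delta>. a k = 0" and a_lead: "a \<delta> \<noteq> 0"
    and b00: "b 0 0 = 0"
    and q_nonzero: "\<exists>i j. b i j \<noteq> 0"
    \<comment> \<open>(\<gamma>,d) = (n_1,m_1) and (n2,m2) are the two leftmost vertices of N(q); hence s > 1\<close>
    and v1: "(real \<gamma>, real d) extreme_point_of newton_polygon b"
    and v2: "(real n2, real m2) extreme_point_of newton_polygon b"
    and v12: "\<gamma> < n2"
    and v_left: "\<forall>v. v extreme_point_of newton_polygon b \<longrightarrow> v \<noteq> (real \<gamma>, real d) \<longrightarrow> fst v \<ge> real n2"
    \<comment> \<open>Case 3: T_1 \<le> \<delta>\<close>
    and case3: "real d + real \<gamma> * (real d - real m2) / (real n2 - real \<gamma>) \<le> real \<delta>"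
  shows "\<forall>n\<ge>1. coeff2 (Qn p q n) (gamma_seq \<gamma> \<delta> d n) (d ^ n) \<noteq> 0 \<and>
           (\<forall>l \<in> (if \<gamma> > 0
                    then {real \<gamma> / (real \<delta> - real d) .. (real n2 - real \<gamma>) / (real d - real m2)}
                    else {0 <.. (real n2 - real \<gamma>) / (real d - real m2)}).
              w_l l (coeff2 (Qn p q n)) = w_l l (monomial2 (gamma_seq \<gamma> \<delta> d n) (d ^ n)) \<and>
              w_l l (monomial2 (gamma_seq \<gamma> \<delta> d n) (d ^ n)) = real (gamma_seq \<gamma> \<delta> d n) + l * real (d ^ n))"
proof -
  define L where "L = (real n2 - real \<gamma>) / (real d - real m2)"
  note nf = newton_facts[OF v1 v2 v12 v_left]
  have bgd: "b \<gamma> d \<noteq> 0" and md: "m2 < d" using nf by auto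
  have N1: "\<And>i j. b i j \<noteq> 0 \<Longrightarrow> \<gamma> \<le> i" using nf(3) by blast
  have N2: "\<And>i j. b i j \<noteq> 0 \<Longrightarrow> real \<gamma> + L * real d \<le> real i + L * real j"
    using nf(4) unfolding L_def by blast
  have L0: "L > 0" using v12 md by (simp add: L_def)
  have d1: "d \<ge> 1" using md by simp
  have tpos: "real \<gamma> * (real d - real m2) / (real n2 - real \<gamma>) \<ge> 0" using v12 md by simp
  have dd: "real d \<le> real \<delta>" using case3 tpos by linarith
  define I where "I = (if \<gamma> > 0 then {real \<gamma> / (real \<delta> - real d) .. L} else {0 <.. L})"
  have LI: "L \<in> I"
  proof (cases "\<gamma> > 0")
    case True
    have t: "real \<gamma> * (real d - real m2) / (real n2 - real \<gamma>) > 0" using True v12 md by simp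
    then have dlt: "real d < real \<delta>" using case3 by linarith
    have "real \<gamma> * (real d - real m2) / (real n2 - real \<gamma>) \<le> real \<delta> - real d" using case3 by linarith
    then have "real \<gamma> * (real d - real m2) \<le> (real \<delta> - real d) * (real n2 - real \<gamma>)"
      using v12 by (simp add: pos_divide_le_eq)
    then have "real \<gamma> / (real \<delta> - real d) \<le> L"
      using dlt md v12 unfolding L_def by (simp add: divide_le_eq le_divide_eq mult.commute)
    then show ?thesis using True by (simp add: I_def)
  next
    case False then show ?thesis using L0 by (simp add: I_def)
  qed
  have Iprop: "0 < l \<and> l \<le> L \<and> real (gamma_seq \<gamma> \<delta> d n) + l * real d ^ n \<le> l * real \<delta> ^ n"
    if lI: "l \<in> I" for l n
  proof (cases "\<gamma> > 0")
    case True
    have t: "real \<gamma> * (real d - real m2) / (real n2 - real \<gamma>) > 0" using True v12 md by simp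
    then have dlt: "real d < real \<delta>" using case3 by linarith
    have l: "real \<gamma> / (real \<delta> - real d) \<le> l" "l \<le> L" using lI True by (auto simp: I_def)
    have lpos: "0 < l" using l(1) True dlt by (smt (verit) divide_pos_pos of_nat_0_less_iff)
    have pw: "real d ^ n \<le> real \<delta> ^ n" using dd by (intro power_mono) auto
    have gl: "real \<gamma> \<le> l * (real \<delta> - real d)" using l(1) dlt by (simp add: divide_le_eq mult.commute)
    have "real (gamma_seq \<gamma> \<delta> d n) * (real \<delta> - real d) = real \<gamma> * (real \<delta> ^ n - real d ^ n)"
      by (rule gamma_real)
    also have "\<dots> \<le> l * (real \<delta> - real d) * (real \<delta> ^ n - real d ^ n)"
      using gl pw by (intro mult_right_mono) auto
    finally have "real (gamma_seq \<gamma> \<delta> d n) \<le> l * (real \<delta> ^ n - real d ^ n)"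
      using dlt by (simp add: mult.commute mult.left_commute)
    then show ?thesis using lpos l(2) by (simp add: algebra_simps)
  next
    case False
    then have g0: "\<gamma> = 0" by simp
    have l: "0 < l" "l \<le> L" using lI False by (auto simp: I_def)
    have "l * real d ^ n \<le> l * real \<delta> ^ n" using dd l by (intro mult_left_mono power_mono) auto
    then show ?thesis using l g0 by (simp add: gamma_seq_def)
  qed
  have FI: "(\<forall>x. fst (PQ a b n) x \<noteq> 0 \<longrightarrow> snd x = 0 \<and> \<delta>^n \<le> fst x) \<and> fst (PQ a b n) (\<delta>^n,0) \<noteq> 0 \<and>
    (\<forall>l\<in>I. wb l (snd (PQ a b n)) (real (gamma_seq \<gamma> \<delta> d n) + l * real d ^ n)) \<and>
    leadk L (snd (PQ a b n)) (gamma_seq \<gamma> \<delta> d n, d^n)" for n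
    by (rule formal_inv[where a=a and b=b and \<gamma>=\<gamma> and d=d and \<delta>=\<delta> and L=L and I=I,
        OF a_low a_lead N1 N2 bgd L0 d1 \<delta>_ge LI Iprop])
  have z0: "fst (PQ a b n) (0,0) = 0 \<and> snd (PQ a b n) (0,0) = 0" for n
  proof
    show "fst (PQ a b n) (0,0) = 0"
    proof (rule ccontr)
      assume nz: "fst (PQ a b n) (0,0) \<noteq> 0"
      have "\<forall>x. fst (PQ a b n) x \<noteq> 0 \<longrightarrow> snd x = 0 \<and> \<delta>^n \<le> fst x" using FI[of n] by blast
      then have "snd (0::nat,0::nat) = 0 \<and> \<delta>^n \<le> fst (0::nat,0::nat)" using nz by blast
      then have "\<delta>^n \<le> 0" by simp
      with \<delta>_ge show False by simp
    qed
    show "snd (PQ a b n) (0,0) = 0"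
    proof (rule ccontr)
      assume nz: "snd (PQ a b n) (0,0) \<noteq> 0"
      have "wb L (snd (PQ a b n)) (real (gamma_seq \<gamma> \<delta> d n) + L * real d ^ n)" using FI[of n] LI by blast
      with nz have "real (gamma_seq \<gamma> \<delta> d n) + L * real d ^ n \<le> wt L (0,0)" unfolding wb_def by blast
      moreover have "L * real d ^ n > 0" using L0 d1 by simp
      ultimately show False by (simp add: wt_def)
    qed
  qed
  obtain rp where rpa: "rep (pa a) (\<lambda>z w. p z) rp" using rep_pa[OF p_germ] by blast
  obtain rq where rqb: "rep (qb b) q rq" using rep_qb[OF q_germ] by blast
  show ?thesis
  proof (intro allI impI)
    fix n :: nat assume "n \<ge> 1"
    let ?Q = "snd (PQ a b n)"
    let ?g = "gamma_seq \<gamma> \<delta> d n"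
    obtain r where rQ: "rep ?Q (\<lambda>z w. snd (skew_iter p q n (z,w))) r"
      using analytic[OF rpa rqb z0] by blast
    have QnEq: "Qn p q n = (\<lambda>z w. snd (skew_iter p q n (z,w)))" by (intro ext) (simp add: Qn_def)
    have cf: "coeff2 (Qn p q n) = (\<lambda>i j. ?Q (i,j))"
      by (intro ext) (simp add: QnEq coeff2_rep[OF rQ])
    have lead: "leadk L ?Q (?g, d^n)" using FI[of n] by blast
    then have Qnz: "?Q (?g, d^n) \<noteq> 0" by (simp add: leadk_def)
    have mono: "w_l l (monomial2 ?g (d ^ n)) = real ?g + l * real (d ^ n)" for l
    proof -
      have "{real i + l * real j |i j. monomial2 ?g (d ^ n) i j \<noteq> 0} = {real ?g + l * real (d ^ n)}"
        by (auto simp: monomial2_def)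
      then show ?thesis unfolding w_l_def by simp
    qed
    show "coeff2 (Qn p q n) ?g (d ^ n) \<noteq> 0 \<and>
           (\<forall>l \<in> (if \<gamma> > 0
                    then {real \<gamma> / (real \<delta> - real d) .. (real n2 - real \<gamma>) / (real d - real m2)}
                    else {0 <.. (real n2 - real \<gamma>) / (real d - real m2)}).
              w_l l (coeff2 (Qn p q n)) = w_l l (monomial2 ?g (d ^ n)) \<and>
              w_l l (monomial2 ?g (d ^ n)) = real ?g + l * real (d ^ n))"
    proof (intro conjI ballI)
      show "coeff2 (Qn p q n) ?g (d ^ n) \<noteq> 0" using Qnz by (simp add: cf)
      fix l assume "l \<in> (if \<gamma> > 0
                    then {real \<gamma> / (real \<delta> - real d) .. (real n2 - real \<gamma>) / (real d - real m2)}
                    else {0 <.. (real n2 - real \<gamma>) / (real d - real m2)})"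
      then have lI: "l \<in> I" unfolding I_def L_def .
      have wbl: "wb l ?Q (real ?g + l * real d ^ n)" using FI[of n] lI by blast
      have "w_l l (coeff2 (Qn p q n)) = Inf {real i + l * real j |i j. ?Q (i,j) \<noteq> 0}"
        unfolding w_l_def cf ..
      also have "\<dots> = real ?g + l * real (d ^ n)"
      proof (rule cInf_eq_minimum)
        show "real ?g + l * real (d ^ n) \<in> {real i + l * real j |i j. ?Q (i,j) \<noteq> 0}"
          using Qnz by blast
        fix y assume "y \<in> {real i + l * real j |i j. ?Q (i,j) \<noteq> 0}"
        then obtain i j where y: "y = real i + l * real j" "?Q (i,j) \<noteq> 0" by blast
        from wbl y(2) have "real ?g + l * real d ^ n \<le> wt l (i,j)" unfolding wb_def by blast
        then show "real ?g + l * real (d ^ n) \<le> y" using y(1) by (simp add: wt_def)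
      qed
      finally show "w_l l (coeff2 (Qn p q n)) = w_l l (monomial2 ?g (d ^ n))" using mono by simp
      show "w_l l (monomial2 ?g (d ^ n)) = real ?g + l * real (d ^ n)" by (rule mono)
    qed
  qed
qed

end
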